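(* Let $(H,\alpha_H)$ be a Hom-bialgebra. The category $\mathcal L^H_H$ of Hom-Long dimodules is a monoidal category with: for objects $U,V$, the object $(U\otimes V,\alpha_U\otimes\alpha_V)$ with action $(u\otimes v)\cdot h=u\cdot\alpha_H^{-i-2}(h_1)\otimes v\cdot\alpha_H^{-j-2}(h_2)$ and coaction $u\otimes v\mapsto u_{(0)}\otimes v_{(0)}\otimes\alpha_H^i(u_{(1)})\alpha_H^j(v_{(1)})$; tensor product of morphisms the tensor product of linear maps; unit $(\Bbbk,\mathrm{id})$; associativity and unit constraints those of $\overline{\mathcal H}^{i,j}(Vec_\Bbbk)$.
   Context: $\Bbbk$ field of characteristic $0$; vector spaces finite-dimensional; structure maps $\alpha$ bijective; $i,j$ fixed integers. $\overline{\mathcal H}^{i,j}(Vec_\Bbbk)$: objects $(X,\alpha_X)$ with $\alpha_X$ a linear automorphism; $a_{X,Y,Z}((x\otimes y)\otimes z)=\alpha_X^{i+1}(x)\otimes(y\otimes\alpha_Z^{-j-1}(z))$, $l_X(\lambda\otimes x)=\lambda\alpha_X^{j+1}(x)$, $r_X(x\otimes\lambda)=\lambda\alpha_X^{i+1}(x)$. Hom-bialgebra: Hom-algebra ($\alpha(a)(bc)=(ab)\alpha(c)$, $\alpha(1)=1$, $1a=a1=\alpha(a)$), Hom-coalgebra ($\varepsilon\alpha=\varepsilon$, $\alpha(c_1)\otimes\Delta(c_2)=\Delta(c_1)\otimes\alpha(c_2)$, $\varepsilon(c_1)c_2=c_1\varepsilon(c_2)=\alpha(c)$), $\Delta,\varepsilon$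 unit-preserving Hom-algebra maps. A Hom-Long dimodule is $(U,\alpha_U)$, a right $H$-Hom-module ($(u\cdot a)\cdot\alpha_H(b)=\alpha_U(u)\cdot(ab)$, $u\cdot1_H=\alpha_U(u)$) and right $H$-Hom-comodule ($\rho(u)=u_{(0)}\otimes u_{(1)}$, $\alpha_U(u_{(0)})\otimes\Delta(u_{(1)})=\rho(u_{(0)})\otimes\alpha_H(u_{(1)})$, $\varepsilon(u_{(1)})u_{(0)}=\alpha_U(u)$), structure maps commuting with the $\alpha$'s, such that $\rho(u\cdot h)=u_{(0)}\cdot\alpha_H(h)\otimes\alpha_H(u_{(1)})$; morphisms are $H$-linear, $H$-colinear maps commuting with the $\alpha$'s. *)

theory Defs
  imports Main
begin

text \<open>Coordinate model: a finite-dimensional k-vector space is 'a => 'k with 'a a finite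
 type; the tensor product of 'a => 'k and 'b => 'k is ('a * 'b) => 'k.\<close>

definition lin :: "(('a \<Rightarrow> 'k::field) \<Rightarrow> ('b \<Rightarrow> 'k)) \<Rightarrow> bool" where
  "lin f \<longleftrightarrow> (\<forall>x y. f (\<lambda>a. x a + y a) = (\<lambda>b. f x b + f y b))
              \<and> (\<forall>c x. f (\<lambda>a. c * x a) = (\<lambda>b. c * f x b))"

definition linf :: "(('a \<Rightarrow> 'k::field) \<Rightarrow> 'k) \<Rightarrow> bool" where
  "linf e \<longleftrightarrow> (\<forall>x y. e (\<lambda>a. x a + y a) = e x + e y) \<and> (\<forall>c x. e (\<lambda>a. c * x a) = c * e x)"

definition tens :: "('a \<Rightarrow> 'k::times) \<Rightarrow> ('b \<Rightarrow> 'k) \<Rightarrow> ('a \<times> 'b \<Rightarrow> 'k)" where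
  "tens x y = (\<lambda>(a, b). x a * y b)"

definition tmap :: "(('a \<Rightarrow> 'k) \<Rightarrow> ('b \<Rightarrow> 'k)) \<Rightarrow> (('c \<Rightarrow> 'k) \<Rightarrow> ('d \<Rightarrow> 'k))
                      \<Rightarrow> ('a \<times> 'c \<Rightarrow> 'k) \<Rightarrow> ('b \<times> 'd \<Rightarrow> 'k)" where
  "tmap f g w = (\<lambda>(b, d). f (\<lambda>a. g (\<lambda>c. w (a, c)) d) b)"

definition reassoc :: "(('a \<times> 'b) \<times> 'c \<Rightarrow> 'k) \<Rightarrow> ('a \<times> ('b \<times> 'c) \<Rightarrow> 'k)" where
  "reassoc w = (\<lambda>(a, b, c). w ((a, b), c))"

definition mid :: "(('a \<times> 'b) \<times> ('c \<times> 'd) \<Rightarrow> 'k) \<Rightarrow> (('a \<times> 'c) \<times> ('b \<times> 'd) \<Rightarrow> 'k)" where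
  "mid w = (\<lambda>((a, c), (b, d)). w ((a, b), (c, d)))"

definition zpow :: "('a \<Rightarrow> 'a) \<Rightarrow> int \<Rightarrow> 'a \<Rightarrow> 'a" where
  "zpow f n = (if 0 \<le> n then f ^^ nat n else inv f ^^ nat (- n))"

record ('k, 'h) hbialg =
  hm :: "('h \<times> 'h \<Rightarrow> 'k) \<Rightarrow> ('h \<Rightarrow> 'k)"
  hone :: "'h \<Rightarrow> 'k"
  hcom :: "('h \<Rightarrow> 'k) \<Rightarrow> ('h \<times> 'h \<Rightarrow> 'k)"
  hcou :: "('h \<Rightarrow> 'k) \<Rightarrow> 'k"
  halpha :: "('h \<Rightarrow> 'k) \<Rightarrow> ('h \<Rightarrow> 'k)"

definition hom_bialgebra :: "('k::field, 'h) hbialg \<Rightarrow> bool" where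
  "hom_bialgebra H \<longleftrightarrow>
    (let m = hm H; one = hone H; \<Delta> = hcom H; \<epsilon> = hcou H; \<alpha> = halpha H in
     lin m \<and> lin \<Delta> \<and> linf \<epsilon> \<and> lin \<alpha> \<and> bij \<alpha>
     \<comment> \<open>Hom-algebra\<close>
     \<and> (\<forall>a b c. m (tens (\<alpha> a) (m (tens b c))) = m (tens (m (tens a b)) (\<alpha> c)))
     \<and> \<alpha> one = one
     \<and> (\<forall>a. m (tens one a) = \<alpha> a \<and> m (tens a one) = \<alpha> a)
     \<and> (\<forall>a b. \<alpha> (m (tens a b)) = m (tens (\<alpha> a) (\<alpha> b)))
     \<comment> \<open>Hom-coalgebra\<close>
     \<and> (\<forall>c. \<epsilon> (\<alpha> c) = \<epsilon> c)
     \<and> (\<forall>c. tmap \<alpha> \<Delta> (\<Delta> c) = reassoc (tmap \<Delta> \<alpha> (\<Delta> c)))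
     \<and> (\<forall>c. (\<lambda>b. \<epsilon> (\<lambda>a. \<Delta> c (a, b))) = \<alpha> c \<and> (\<lambda>a. \<epsilon> (\<lambda>b. \<Delta> c (a, b))) = \<alpha> c)
     \<and> (\<forall>c. \<Delta> (\<alpha> c) = tmap \<alpha> \<alpha> (\<Delta> c))
     \<comment> \<open>Delta, epsilon unit-preserving Hom-algebra maps\<close>
     \<and> (\<forall>a b. \<Delta> (m (tens a b)) = tmap m m (mid (tens (\<Delta> a) (\<Delta> b))))
     \<and> \<Delta> one = tens one one
     \<and> (\<forall>a b. \<epsilon> (m (tens a b)) = \<epsilon> a * \<epsilon> b)
     \<and> \<epsilon> one = 1)"

record ('k, 'h, 'u) dimod =
  dal :: "('u \<Rightarrow> 'k) \<Rightarrow> ('u \<Rightarrow> 'k)"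
  dact :: "('u \<times> 'h \<Rightarrow> 'k) \<Rightarrow> ('u \<Rightarrow> 'k)"
  dco :: "('u \<Rightarrow> 'k) \<Rightarrow> ('u \<times> 'h \<Rightarrow> 'k)"

definition hom_long_dimod :: "('k::field, 'h) hbialg \<Rightarrow> ('k, 'h, 'u) dimod \<Rightarrow> bool" where
  "hom_long_dimod H U \<longleftrightarrow>
    (let aU = dal U; act = dact U; \<rho> = dco U; aH = halpha H in
     lin aU \<and> bij aU \<and> lin act \<and> lin \<rho>
     \<comment> \<open>right H-Hom-module\<close>
     \<and> (\<forall>u a b. act (tens (act (tens u a)) (aH b)) = act (tens (aU u) (hm H (tens a b))))
     \<and> (\<forall>u. act (tens u (hone H)) = aU u)
     \<comment> \<open>right H-Hom-comodule\<close>
     \<and> (\<forall>u. tmap aU (hcom H) (\<rho> u) = reassoc (tmap \<rho> aH (\<rho> u)))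
     \<and> (\<forall>u. (\<lambda>x. hcou H (\<lambda>h. \<rho> u (x, h))) = aU u)
     \<comment> \<open>structure maps commute with the alphas\<close>
     \<and> (\<forall>u h. aU (act (tens u h)) = act (tens (aU u) (aH h)))
     \<and> (\<forall>u. \<rho> (aU u) = tmap aU aH (\<rho> u))
     \<comment> \<open>Long compatibility\<close>
     \<and> (\<forall>u h. \<rho> (act (tens u h)) = tmap (\<lambda>x. act (tens x (aH h))) aH (\<rho> u)))"

definition ld_mor :: "('k::field, 'h) hbialg \<Rightarrow> ('k, 'h, 'u) dimod \<Rightarrow> ('k, 'h, 'v) dimod
                      \<Rightarrow> (('u \<Rightarrow> 'k) \<Rightarrow> ('v \<Rightarrow> 'k)) \<Rightarrow> bool" where
  "ld_mor H U V f \<longleftrightarrow> lin f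
     \<and> (\<forall>u. f (dal U u) = dal V (f u))
     \<and> (\<forall>u h. f (dact U (tens u h)) = dact V (tens (f u) h))
     \<and> (\<forall>u. dco V (f u) = tmap f id (dco U u))"

definition tensor_dimod :: "('k::field, 'h) hbialg \<Rightarrow> int \<Rightarrow> int \<Rightarrow> ('k, 'h, 'u) dimod
    \<Rightarrow> ('k, 'h, 'v) dimod \<Rightarrow> ('k, 'h, 'u \<times> 'v) dimod" where
  "tensor_dimod H i j U V =
    \<lparr> dal = tmap (dal U) (dal V),
      dact = (\<lambda>w. tmap (dact U) (dact V)
               (mid (tmap id (\<lambda>h. tmap (zpow (halpha H) (- i - 2)) (zpow (halpha H) (- j - 2))
                                        (hcom H h)) w))),
      dco = (\<lambda>w. tmap id (\<lambda>z. hm H (tmap (zpow (halpha H) i) (zpow (halpha H) j) z))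
               (mid (tmap (dco U) (dco V) w))) \<rparr>"

definition unit_dimod :: "('k::field, 'h) hbialg \<Rightarrow> ('k, 'h, unit) dimod" where
  "unit_dimod H = \<lparr> dal = id, dact = (\<lambda>w _. hcou H (\<lambda>h. w ((), h))), dco = (\<lambda>x. tens x (hone H)) \<rparr>"

text \<open>associativity and unit constraints of the category H^{i,j}(Vec_k)\<close>
definition amap :: "int \<Rightarrow> int \<Rightarrow> (('u \<Rightarrow> 'k) \<Rightarrow> ('u \<Rightarrow> 'k)) \<Rightarrow> (('w \<Rightarrow> 'k) \<Rightarrow> ('w \<Rightarrow> 'k))
                    \<Rightarrow> (('u \<times> 'v) \<times> 'w \<Rightarrow> 'k) \<Rightarrow> ('u \<times> ('v \<times> 'w) \<Rightarrow> 'k)" where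
  "amap i j aU aW z = reassoc (tmap (tmap (zpow aU (i + 1)) id) (zpow aW (- j - 1)) z)"

definition lmap :: "int \<Rightarrow> (('x \<Rightarrow> 'k) \<Rightarrow> ('x \<Rightarrow> 'k)) \<Rightarrow> (unit \<times> 'x \<Rightarrow> 'k) \<Rightarrow> ('x \<Rightarrow> 'k)" where
  "lmap j aX w = zpow aX (j + 1) (\<lambda>x. w ((), x))"

definition rmap :: "int \<Rightarrow> (('x \<Rightarrow> 'k) \<Rightarrow> ('x \<Rightarrow> 'k)) \<Rightarrow> ('x \<times> unit \<Rightarrow> 'k) \<Rightarrow> ('x \<Rightarrow> 'k)" where
  "rmap i aX w = zpow aX (i + 1) (\<lambda>x. w (x, ()))"

end

theory Submission
  imports Defs
begin

definition delta :: "'a \<Rightarrow> 'a \<Rightarrow> 'k::field" where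
  "delta a = (\<lambda>x. if x = a then 1 else 0)"

lemma lin_add: "lin f \<Longrightarrow> f (\<lambda>a. x a + y a) = (\<lambda>b. f x b + f y b)"
  by (simp add: lin_def)
lemma lin_scale: "lin f \<Longrightarrow> f (\<lambda>a. c * x a) = (\<lambda>b. c * f x b)"
  by (simp add: lin_def)
lemma lin_zero: "lin f \<Longrightarrow> f (\<lambda>a. 0) = (\<lambda>b. 0)"
  using lin_scale[of f 0 "\<lambda>a. 0"] by simp

lemma lin_sum:
  assumes "lin f" "finite S"
  shows "f (\<lambda>z. \<Sum>s\<in>S. c s * v s z) = (\<lambda>y. \<Sum>s\<in>S. c s * f (v s) y)"
  using assms(2)
proof (induction S rule: finite_induct)
  case empty then show ?case using lin_zero[OF assms(1)] by simp
next
  case (insert x S)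
  have "f (\<lambda>z. \<Sum>s\<in>insert x S. c s * v s z) = f (\<lambda>z. c x * v x z + (\<Sum>s\<in>S. c s * v s z))"
    using insert by simp
  also have "\<dots> = (\<lambda>b. f (\<lambda>z. c x * v x z) b + f (\<lambda>z. \<Sum>s\<in>S. c s * v s z) b)"
    using lin_add[OF assms(1), of "\<lambda>z. c x * v x z" "\<lambda>z. \<Sum>s\<in>S. c s * v s z"] by simp
  also have "\<dots> = (\<lambda>y. \<Sum>s\<in>insert x S. c s * f (v s) y)"
    using insert lin_scale[OF assms(1), of "c x" "v x"] by simp
  finally show ?case .
qed

lemma expand: "(w::'a::finite \<Rightarrow> 'k::field) = (\<lambda>z. \<Sum>a\<in>UNIV. w a * delta a z)"
proof
  fix z
  have "(\<Sum>a\<in>UNIV. w a * delta a z) = (\<Sum>a\<in>{z}. w a * delta a z)"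
    by (rule sum.mono_neutral_right) (auto simp: delta_def)
  then show "w z = (\<Sum>a\<in>UNIV. w a * delta a z)" by (simp add: delta_def)
qed

lemma lin_expand:
  fixes w :: "'a::finite \<Rightarrow> 'k::field"
  assumes "lin f" shows "f w = (\<lambda>y. \<Sum>a\<in>UNIV. w a * f (delta a) y)"
  by (subst expand) (simp add: lin_sum[OF assms])

lemma lin_ext:
  fixes f g :: "('a::finite \<Rightarrow> 'k::field) \<Rightarrow> ('b \<Rightarrow> 'k)"
  assumes "lin f" "lin g" "\<And>a. f (delta a) = g (delta a)" shows "f = g"
proof
  fix w show "f w = g w" using lin_expand[OF assms(1), of w] lin_expand[OF assms(2), of w] assms(3) by simp
qed

lemma delta_pair: "delta (a, b) = tens (delta a) (delta b)"
  by (auto simp: delta_def tens_def)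

lemma lin_ext2:
  fixes F G :: "('a::finite \<times> 'b::finite \<Rightarrow> 'k::field) \<Rightarrow> ('c \<Rightarrow> 'k)"
  assumes "lin F" "lin G" "\<And>x y. F (tens x y) = G (tens x y)" shows "F = G"
  using assms by (intro lin_ext) (auto simp: delta_pair)

lemma lin_tens1: "lin (\<lambda>x. tens x (y::'b \<Rightarrow> 'k::field))"
  by (auto simp: lin_def tens_def fun_eq_iff algebra_simps)
lemma lin_tens2: "lin (\<lambda>y. tens (x::'b \<Rightarrow> 'k::field) y)"
  by (auto simp: lin_def tens_def fun_eq_iff algebra_simps)
lemma lin_tens2': "lin (tens (x::'b \<Rightarrow> 'k::field))"
  using lin_tens2 by (metis (no_types))

lemma lin_id: "lin id" and lin_id': "lin (\<lambda>x. x)" by (auto simp: lin_def)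
lemma lin_comp: "lin f \<Longrightarrow> lin g \<Longrightarrow> lin (f \<circ> g)"
  and lin_comp': "lin f \<Longrightarrow> lin g \<Longrightarrow> lin (\<lambda>x. f (g x))"
  by (auto simp: lin_def)

lemma lin_ext3:
  fixes F G :: "(('a::finite \<times> 'b::finite) \<times> 'c::finite \<Rightarrow> 'k::field) \<Rightarrow> ('d \<Rightarrow> 'k)"
  assumes "lin F" "lin G" "\<And>x y z. F (tens (tens x y) z) = G (tens (tens x y) z)" shows "F = G"
proof (rule lin_ext2[OF assms(1,2)])
  fix w z
  show "F (tens w z) = G (tens w z)"
    using lin_ext2[OF lin_comp'[OF assms(1) lin_tens1] lin_comp'[OF assms(2) lin_tens1]] assms(3)
    by metis
qed

lemma lin_ext3':
  fixes F G :: "('a::finite \<times> 'b::finite \<times> 'c::finite \<Rightarrow> 'k::field) \<Rightarrow> ('d \<Rightarrow> 'k)"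
  assumes "lin F" "lin G" "\<And>x y z. F (tens x (tens y z)) = G (tens x (tens y z))" shows "F = G"
proof (rule lin_ext2[OF assms(1,2)])
  fix w z
  show "F (tens z w) = G (tens z w)"
    using lin_ext2[OF lin_comp'[OF assms(1) lin_tens2] lin_comp'[OF assms(2) lin_tens2]] assms(3)
    by metis
qed

lemma lin_tmap: "lin f \<Longrightarrow> lin g \<Longrightarrow> lin (tmap f g)"
  unfolding lin_def tmap_def
  by (auto simp: fun_eq_iff)

lemma tmap_tens: "lin f \<Longrightarrow> lin g \<Longrightarrow> tmap f g (tens x y) = tens (f x) (g y)"
proof -
  assume f: "lin f" and g: "lin g"
  have 1: "\<And>a. g (\<lambda>c. x a * y c) = (\<lambda>d. x a * g y d)" using lin_scale[OF g] by simp
  have 2: "\<And>d. f (\<lambda>a. g y d * x a) = (\<lambda>b. g y d * f x b)" using lin_scale[OF f] by simp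
  show ?thesis unfolding tmap_def tens_def
    by (auto simp: fun_eq_iff 1 2[simplified mult.commute] mult.commute)
qed

lemma lin_reassoc: "lin reassoc" by (auto simp: lin_def reassoc_def fun_eq_iff)
lemma lin_mid: "lin mid" by (auto simp: lin_def mid_def fun_eq_iff)
lemma reassoc_tens: "reassoc (tens (tens (x::'a\<Rightarrow>'k::field) y) z) = tens x (tens y z)"
  by (auto simp: reassoc_def tens_def fun_eq_iff mult.assoc)
lemma mid_tens: "mid (tens (tens (a::'a\<Rightarrow>'k::field) b) (tens c d)) = tens (tens a c) (tens b d)"
  by (auto simp: mid_def tens_def fun_eq_iff mult.assoc mult.left_commute)
lemma tmap_id: "tmap id id w = w" and tmap_id': "tmap (\<lambda>x. x) (\<lambda>x. x) w = w"
  by (auto simp: tmap_def fun_eq_iff)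
lemma tmap_id_fun: "tmap id id = id" by (auto simp: tmap_id fun_eq_iff)

lemma lin_ext4:
  fixes F G :: "(('a::finite \<times> 'b::finite) \<times> ('c::finite \<times> 'e::finite) \<Rightarrow> 'k::field) \<Rightarrow> ('d \<Rightarrow> 'k)"
  assumes "lin F" "lin G" "\<And>a b c d. F (tens (tens a b) (tens c d)) = G (tens (tens a b) (tens c d))" shows "F = G"
proof (rule lin_ext2[OF assms(1,2)])
  fix w z
  have "(\<lambda>z. F (tens w z)) = (\<lambda>z. G (tens w z))"
  proof (rule lin_ext2[OF lin_comp'[OF assms(1) lin_tens2] lin_comp'[OF assms(2) lin_tens2]])
    fix c d
    show "F (tens w (tens c d)) = G (tens w (tens c d))"
      using lin_ext2[OF lin_comp'[OF assms(1) lin_tens1] lin_comp'[OF assms(2) lin_tens1]] assms(3)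
      by metis
  qed
  then show "F (tens w z) = G (tens w z)" by metis
qed

lemma tmap_comp:
  fixes f :: "('b::finite \<Rightarrow> 'k::field) \<Rightarrow> ('c::finite \<Rightarrow> 'k)" and f' :: "('a::finite \<Rightarrow> 'k) \<Rightarrow> ('b \<Rightarrow> 'k)"
  and g :: "('e::finite \<Rightarrow> 'k::field) \<Rightarrow> ('x::finite \<Rightarrow> 'k)" and g' :: "('d::finite \<Rightarrow> 'k) \<Rightarrow> ('e \<Rightarrow> 'k)"
  assumes "lin f" "lin g" "lin f'" "lin g'"
  shows "tmap f g (tmap f' g' w) = tmap (\<lambda>x. f (f' x)) (\<lambda>x. g (g' x)) w"
proof -
  have "(\<lambda>w. tmap f g (tmap f' g' w)) = tmap (\<lambda>x. f (f' x)) (\<lambda>x. g (g' x))"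
    by (rule lin_ext2) (simp_all add: assms lin_comp' lin_tmap tmap_tens)
  then show ?thesis by metis
qed

lemma tmap_reassoc:
  fixes f :: "('a::finite \<Rightarrow> 'k::field) \<Rightarrow> ('a2 \<Rightarrow> 'k)" and g :: "('b::finite \<Rightarrow> 'k) \<Rightarrow> ('b2 \<Rightarrow> 'k)"
    and h :: "('c::finite \<Rightarrow> 'k) \<Rightarrow> ('c2 \<Rightarrow> 'k)"
  assumes "lin f" "lin g" "lin h"
  shows "reassoc (tmap (tmap f g) h w) = tmap f (tmap g h) (reassoc w)"
proof -
  have "(\<lambda>w. reassoc (tmap (tmap f g) h w)) = (\<lambda>w. tmap f (tmap g h) (reassoc w))"
    by (rule lin_ext3) (simp_all add: assms lin_comp' lin_tmap tmap_tens lin_reassoc reassoc_tens)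
  then show ?thesis by metis
qed

lemma tmap_mid:
  fixes f :: "('a::finite \<Rightarrow> 'k::field) \<Rightarrow> ('a2 \<Rightarrow> 'k)" and g :: "('b::finite \<Rightarrow> 'k) \<Rightarrow> ('b2 \<Rightarrow> 'k)"
    and h :: "('c::finite \<Rightarrow> 'k) \<Rightarrow> ('c2 \<Rightarrow> 'k)" and k :: "('d::finite \<Rightarrow> 'k) \<Rightarrow> ('d2 \<Rightarrow> 'k)"
  assumes "lin f" "lin g" "lin h" "lin k"
  shows "mid (tmap (tmap f g) (tmap h k) w) = tmap (tmap f h) (tmap g k) (mid w)"
proof -
  have "(\<lambda>w. mid (tmap (tmap f g) (tmap h k) w)) = (\<lambda>w. tmap (tmap f h) (tmap g k) (mid w))"
    by (rule lin_ext4) (simp_all add: assms lin_comp' lin_tmap tmap_tens lin_mid mid_tens)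
  then show ?thesis by metis
qed

lemma mid_tens_left:
  fixes t :: "'a::finite \<times> 'b::finite \<Rightarrow> 'k::field" and u :: "'c \<Rightarrow> 'k" and v :: "'d \<Rightarrow> 'k"
  shows "mid (tens (tens u v) t) = tmap (tens u) (tens v) t"
proof -
  have "(\<lambda>t::'a\<times>'b\<Rightarrow>'k. mid (tens (tens u v) t)) = tmap (tens u) (tens v)"
    by (rule lin_ext2) (simp_all add: lin_comp' lin_tmap tmap_tens lin_mid mid_tens lin_tens2)
  then show ?thesis by metis
qed

lemma zpow_0: "zpow f 0 = id" by (simp add: zpow_def)
lemma zpow_0': "zpow f 0 x = x" by (simp add: zpow_def)
lemma zpow_1: "zpow f 1 = f" by (simp add: zpow_def)

lemma zpow_succ: assumes "bij f" shows "zpow f (n+1) x = f (zpow f n x)"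
proof (cases "n \<ge> 0")
  case True
  then have "nat (n+1) = Suc (nat n)" by simp
  then show ?thesis using True by (simp add: zpow_def)
next
  case False
  then have "n \<le> -1" by simp
  then show ?thesis
  proof (cases "n = -1")
    case True
    then show ?thesis using assms by (simp add: zpow_def bij_is_surj surj_f_inv_f)
  next
    case False
    with \<open>n \<le> -1\<close> have "nat (-n) = Suc (nat (-(n+1)))" "\<not> 0 \<le> n+1" "\<not> 0 \<le> n" by auto
    then show ?thesis using assms
      by (simp add: zpow_def bij_is_surj surj_f_inv_f)
  qed
qed

lemma zpow_pred: assumes "bij f" shows "zpow f (n - 1) x = inv f (zpow f n x)"
  using zpow_succ[OF assms, of "n - 1" x] assms by (simp add: bij_is_inj inv_f_f)

lemma gen_commute:
  assumes R1: "\<And>n x. R (n+1) x = A (R n x)" and R0: "\<And>x. R 0 x = x"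
    and Q1: "\<And>n x. Q (n+1) x = B (Q n x)" and Q0: "\<And>x. Q 0 x = x"
    and injB: "inj B" and c: "\<And>x. f (A x) = B (f x)"
  shows "f (R (n::int) x) = Q n (f x)"
proof (induction n rule: int_induct[where k=0])
  case base then show ?case by (simp add: R0 Q0)
next
  case (step1 i) then show ?case by (simp add: R1 Q1 c)
next
  case (step2 i)
  have "B (Q (i - 1) (f x)) = Q i (f x)" using Q1[of "i - 1"] by simp
  also have "\<dots> = f (R i x)" using step2 by simp
  also have "\<dots> = B (f (R (i - 1) x))" using R1[of "i - 1"] c by simp
  finally show ?case using injB by (simp add: inj_eq)
qed

lemma zpow_add: assumes "bij f" shows "zpow f (a + b) x = zpow f a (zpow f b x)"
proof (induction a rule: int_induct[where k=0])
  case base then show ?case by (simp add: zpow_0')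
next
  case (step1 i) then show ?case using zpow_succ[OF assms, of "i + b"] zpow_succ[OF assms, of i]
    by (simp add: add_ac)
next
  case (step2 i) then show ?case using zpow_pred[OF assms, of "i + b"] zpow_pred[OF assms, of i]
    by (simp add: add_ac add_diff_eq)
qed

lemma zpow_commute:
  assumes "bij a" "bij b" "\<And>x. f (a x) = b (f x)"
  shows "f (zpow a n x) = zpow b n (f x)"
  by (rule gen_commute[where A=a and B=b]) (simp_all add: zpow_succ assms zpow_0' bij_is_inj)

lemma lin_inv: assumes "lin f" "bij f" shows "lin (inv f)"
  unfolding lin_def
proof safe
  have s: "\<And>x. f (inv f x) = x" using assms(2) by (simp add: bij_is_surj surj_f_inv_f)
  have i: "\<And>x. inv f (f x) = x" using assms(2) by (simp add: bij_is_inj inv_f_f)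
  fix x y
  have "f (\<lambda>b. inv f x b + inv f y b) = (\<lambda>b. x b + y b)" using lin_add[OF assms(1)] s by simp
  then show "inv f (\<lambda>a. x a + y a) = (\<lambda>b. inv f x b + inv f y b)" using i by metis
next
  have s: "\<And>x. f (inv f x) = x" using assms(2) by (simp add: bij_is_surj surj_f_inv_f)
  have i: "\<And>x. inv f (f x) = x" using assms(2) by (simp add: bij_is_inj inv_f_f)
  fix c x
  have "f (\<lambda>b. c * inv f x b) = (\<lambda>b. c * x b)" using lin_scale[OF assms(1)] s by simp
  then show "inv f (\<lambda>a. c * x a) = (\<lambda>b. c * inv f x b)" using i by metis
qed

lemma lin_funpow: fixes f :: "('a\<Rightarrow>'k::field)\<Rightarrow>('a\<Rightarrow>'k)" assumes "lin f" shows "lin (f ^^ n)"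
proof (induction n)
  case 0 show ?case by (simp add: lin_def funpow_simps_right)
next
  case (Suc n) then show ?case by (simp add: lin_comp' assms)
qed
lemma bij_funpow': fixes f :: "'a \<Rightarrow> 'a" assumes "bij f" shows "bij (f ^^ n)"
proof (induction n)
  case 0 show ?case by (simp add: funpow_simps_right bij_def inj_on_def)
next
  case (Suc n) then show ?case using bij_comp[OF Suc assms] by (simp add: comp_def)
qed
lemma lin_zpow: "lin f \<Longrightarrow> bij f \<Longrightarrow> lin (zpow f n)"
  by (simp add: zpow_def lin_funpow lin_inv)
lemma bij_zpow: "bij f \<Longrightarrow> bij (zpow f n)"
  by (simp add: zpow_def bij_funpow' bij_imp_bij_inv)

lemma tmap_comp_o:
  fixes f :: "('b::finite \<Rightarrow> 'k::field) \<Rightarrow> ('c::finite \<Rightarrow> 'k)" and f' :: "('a::finite \<Rightarrow> 'k) \<Rightarrow> ('b \<Rightarrow> 'k)"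
  and g :: "('e::finite \<Rightarrow> 'k::field) \<Rightarrow> ('x::finite \<Rightarrow> 'k)" and g' :: "('d::finite \<Rightarrow> 'k) \<Rightarrow> ('e \<Rightarrow> 'k)"
  assumes "lin f" "lin g" "lin f'" "lin g'"
  shows "tmap f g (tmap f' g' w) = tmap (f \<circ> f') (g \<circ> g') w"
  using tmap_comp[OF assms] by (simp add: comp_def)

lemma bij_tmap:
  fixes f :: "('a::finite \<Rightarrow> 'k::field) \<Rightarrow> ('a \<Rightarrow> 'k)" and g :: "('b::finite \<Rightarrow> 'k) \<Rightarrow> ('b \<Rightarrow> 'k)"
  assumes "lin f" "bij f" "lin g" "bij g" shows "bij (tmap f g)"
proof (rule o_bij)
  have i: "inv f \<circ> f = id" "f \<circ> inv f = id" "inv g \<circ> g = id" "g \<circ> inv g = id"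
    using assms by (simp_all add: bij_is_inj bij_is_surj fun_eq_iff surj_f_inv_f inv_f_f)
  show "tmap (inv f) (inv g) \<circ> tmap f g = id"
    using tmap_comp_o[OF lin_inv lin_inv, OF assms(1,2,3,4,1,3)] i by (simp add: fun_eq_iff tmap_id)
  show "tmap f g \<circ> tmap (inv f) (inv g) = id"
    using tmap_comp_o[OF _ _ lin_inv lin_inv, OF assms(1,3,1,2,3,4)] i by (simp add: fun_eq_iff tmap_id)
qed

lemmas lin_basic[simp] = lin_id lin_comp lin_tmap lin_tens2' lin_tens1 lin_mid lin_reassoc
lemmas tsimps = tmap_tens tmap_comp_o mid_tens reassoc_tens tmap_reassoc tmap_mid mid_tens_left comp_assoc

locale hb =
  fixes H :: "('k::field, 'h::finite) hbialg"
  assumes HB: "hom_bialgebra H"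
begin

abbreviation "hM \<equiv> hm H"
abbreviation "hD \<equiv> hcom H"
abbreviation "hE \<equiv> hcou H"
abbreviation "hA \<equiv> halpha H"
abbreviation "h1 \<equiv> hone H"
abbreviation "P n \<equiv> zpow (halpha H) n"

lemma lin_M[simp]: "lin hM" and lin_D[simp]: "lin hD" and linf_E: "linf hE" and lin_A[simp]: "lin hA"
  and bij_A: "bij hA"
  and M_assoc: "hM (tens (hA a) (hM (tens b c))) = hM (tens (hM (tens a b)) (hA c))"
  and A_one[simp]: "hA h1 = h1"
  and M_unitL: "hM (tens h1 a) = hA a" and M_unitR: "hM (tens a h1) = hA a"
  and A_M: "hA (hM (tens a b)) = hM (tens (hA a) (hA b))"
  and E_A[simp]: "hE (hA c) = hE c"
  and D_coassoc: "tmap hA hD (hD c) = reassoc (tmap hD hA (hD c))"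
  and counitL: "(\<lambda>b. hE (\<lambda>a. hD c (a, b))) = hA c"
  and counitR: "(\<lambda>a. hE (\<lambda>b. hD c (a, b))) = hA c"
  and D_A: "hD (hA c) = tmap hA hA (hD c)"
  and D_M: "hD (hM (tens a b)) = tmap hM hM (mid (tens (hD a) (hD b)))"
  and D_one[simp]: "hD h1 = tens h1 h1"
  and E_M: "hE (hM (tens a b)) = hE a * hE b"
  and E_one[simp]: "hE h1 = 1"
  using HB unfolding hom_bialgebra_def Let_def by blast+

lemma lin_P[simp]: "lin (P n)" using lin_zpow[OF lin_A bij_A] .
lemma bij_P: "bij (P n)" using bij_zpow[OF bij_A] .
lemma P_add: "P (a + b) x = P a (P b x)" using zpow_add[OF bij_A] .
lemma P_one[simp]: "P n h1 = h1"
  using gen_commute[where f="\<lambda>_::unit. h1" and A=id and B=hA and R="\<lambda>n. id" and Q=P, of n]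
  by (simp add: zpow_succ[OF bij_A] zpow_0' bij_A bij_is_inj)
lemma E_P[simp]: "hE (P n c) = hE c"
  using gen_commute[where f=hE and A=hA and B=id and R=P and Q="\<lambda>n. id", of n]
  by (simp add: zpow_succ[OF bij_A] zpow_0')
lemma A_P: "hA (P n x) = P n (hA x)"
  using zpow_commute[OF bij_A bij_A, of hA] by simp

lemma P_succ_fun: "P (n+1) = (\<lambda>x. hA (P n x))"
  by (rule ext) (simp add: zpow_succ[OF bij_A])

lemma inj_tmapA: "inj (tmap hA hA)"
  using bij_tmap[OF lin_A bij_A lin_A bij_A] bij_is_inj by blast

lemma D_P: "hD (P n c) = tmap (P n) (P n) (hD c)"
proof (rule gen_commute[where A=hA and B="tmap hA hA" and R=P and Q="\<lambda>n. tmap (P n) (P n)"])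
  show "\<And>n x. tmap (P (n + 1)) (P (n + 1)) x = tmap hA hA (tmap (P n) (P n) x)"
    by (simp add: tmap_comp_o comp_def P_succ_fun)
qed (simp_all add: zpow_succ[OF bij_A] zpow_0 zpow_0' tmap_id tmap_id' inj_tmapA D_A)

lemma M_A_map: "hM (tmap hA hA w) = hA (hM w)"
proof -
  have "(\<lambda>w. hM (tmap hA hA w)) = (\<lambda>w. hA (hM w))"
    by (rule lin_ext2) (simp_all add: lin_comp' tmap_tens A_M)
  then show ?thesis by metis
qed

lemma M_P_map: "hM (tmap (P n) (P n) w) = P n (hM w)"
proof (rule gen_commute[where A="tmap hA hA" and B=hA and R="\<lambda>n. tmap (P n) (P n)" and Q=P])
  show "\<And>n x. tmap (P (n + 1)) (P (n + 1)) x = tmap hA hA (tmap (P n) (P n) x)"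
    by (simp add: tmap_comp_o comp_def P_succ_fun)
qed (simp_all add: zpow_succ[OF bij_A] zpow_0 zpow_0' tmap_id tmap_id' bij_A bij_is_inj M_A_map)

lemma M_P: "hM (tens (P n a) (P n b)) = P n (hM (tens a b))"
  using M_P_map[of n "tens a b"] by (simp add: tmap_tens)

end

context hb begin

lemma dimod_facts:
  assumes "hom_long_dimod H U"
  shows lin_al: "lin (dal U)" and bij_al: "bij (dal U)" and lin_act: "lin (dact U)" and lin_co: "lin (dco U)"
  and act_assoc: "dact U (tens (dact U (tens u a)) (hA b)) = dact U (tens (dal U u) (hM (tens a b)))"
  and act_one: "dact U (tens u h1) = dal U u"
  and co_coassoc: "tmap (dal U) hD (dco U u) = reassoc (tmap (dco U) hA (dco U u))"
  and co_counit: "(\<lambda>x. hE (\<lambda>h. dco U u (x, h))) = dal U u"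
  and act_al: "dal U (dact U (tens u h)) = dact U (tens (dal U u) (hA h))"
  and co_al: "dco U (dal U u) = tmap (dal U) hA (dco U u)"
  and long: "dco U (dact U (tens u h)) = tmap (\<lambda>x. dact U (tens x (hA h))) hA (dco U u)"
  using assms unfolding hom_long_dimod_def Let_def by blast+

lemma tmap_cong: "f = f' \<Longrightarrow> g = g' \<Longrightarrow> tmap f g w = tmap f' g' w" by simp

lemma lin_T[simp]: "lin (tmap (P a) (P b) \<circ> hD)" by simp

lemma dactT_eq: "dact (tensor_dimod H i j U V)
   = tmap (dact U) (dact V) \<circ> mid \<circ> tmap id (tmap (P (-i-2)) (P (-j-2)) \<circ> hD)"
  by (simp add: tensor_dimod_def fun_eq_iff comp_def)
lemma dcoT_eq: "dco (tensor_dimod H i j U V)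
   = tmap id (hM \<circ> tmap (P i) (P j)) \<circ> mid \<circ> tmap (dco U) (dco V)"
  by (simp add: tensor_dimod_def fun_eq_iff comp_def)
lemma dalT_eq: "dal (tensor_dimod H i j U V) = tmap (dal U) (dal V)"
  by (simp add: tensor_dimod_def)

lemma actT_pure:
  fixes U :: "('k, 'h, 'u::finite) dimod" and V :: "('k, 'h, 'v::finite) dimod"
  assumes "hom_long_dimod H U" "hom_long_dimod H V"
  shows "dact (tensor_dimod H i j U V) (tens (tens u v) h)
     = tmap (dact U \<circ> (tens u \<circ> P (-i-2))) (dact V \<circ> (tens v \<circ> P (-j-2))) (hD h)"
  using assms by (simp add: dactT_eq tsimps lin_act)

lemma lin_actT[simp]:
  fixes U :: "('k, 'h, 'u::finite) dimod" and V :: "('k, 'h, 'v::finite) dimod"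
  assumes "hom_long_dimod H U" "hom_long_dimod H V"
  shows "lin (dact (tensor_dimod H i j U V))"
  using assms by (simp add: dactT_eq lin_act)

lemma lin_coT[simp]:
  fixes U :: "('k, 'h, 'u::finite) dimod" and V :: "('k, 'h, 'v::finite) dimod"
  assumes "hom_long_dimod H U" "hom_long_dimod H V"
  shows "lin (dco (tensor_dimod H i j U V))"
  using assms by (simp add: dcoT_eq lin_co)

lemma lin_alT[simp]:
  fixes U :: "('k, 'h, 'u::finite) dimod" and V :: "('k, 'h, 'v::finite) dimod"
  assumes "hom_long_dimod H U" "hom_long_dimod H V"
  shows "lin (dal (tensor_dimod H i j U V))"
  using assms by (simp add: dalT_eq lin_al)

lemma tensor_act_assoc:
  fixes U :: "('k, 'h, 'u::finite) dimod" and V :: "('k, 'h, 'v::finite) dimod" and i j :: int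
  assumes HU: "hom_long_dimod H U" and HV: "hom_long_dimod H V"
  defines "X \<equiv> tensor_dimod H i j U V"
  shows "dact X (tens (dact X (tens x a)) (hA b)) = dact X (tens (dal X x) (hM (tens a b)))"
proof -
  note lins = lin_act[OF HU] lin_act[OF HV] lin_al[OF HU] lin_al[OF HV]
  have "dact X \<circ> (\<lambda>y. tens y (hA b)) \<circ> dact X \<circ> (\<lambda>x. tens x a)
      = dact X \<circ> (\<lambda>y. tens y (hM (tens a b))) \<circ> dal X"
  proof (rule lin_ext2)
    show "lin (dact X \<circ> (\<lambda>y. tens y (hA b)) \<circ> dact X \<circ> (\<lambda>x. tens x a))"
      using assms by simp
    show "lin (dact X \<circ> (\<lambda>y. tens y (hM (tens a b))) \<circ> dal X)"
      using assms by simp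
    fix u v
    let ?F = "dact U \<circ> (tens (dal U u) \<circ> P (-i-2))"
    let ?G = "dact V \<circ> (tens (dal V v) \<circ> P (-j-2))"
    have gen: "dact X \<circ> (\<lambda>y. tens y (hA b)) \<circ> tmap (dact U \<circ> (tens u \<circ> P (-i-2))) (dact V \<circ> (tens v \<circ> P (-j-2)))
        = tmap ?F ?G \<circ> tmap hM hM \<circ> mid \<circ> (\<lambda>t. tens t (hD b))"
    proof (rule lin_ext2)
      show "lin (dact X \<circ> (\<lambda>y. tens y (hA b)) \<circ> tmap (dact U \<circ> (tens u \<circ> P (-i-2))) (dact V \<circ> (tens v \<circ> P (-j-2))))"
        using assms lins by simp
      show "lin (tmap ?F ?G \<circ> tmap hM hM \<circ> mid \<circ> (\<lambda>t. tens t (hD b)))"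
        using lins by simp
      fix x y
      show "(dact X \<circ> (\<lambda>y. tens y (hA b)) \<circ> tmap (dact U \<circ> (tens u \<circ> P (-i-2))) (dact V \<circ> (tens v \<circ> P (-j-2)))) (tens x y)
          = (tmap ?F ?G \<circ> tmap hM hM \<circ> mid \<circ> (\<lambda>t. tens t (hD b))) (tens x y)"
        unfolding X_def using assms lins
        apply (simp add: tsimps actT_pure D_A)
        apply (rule tmap_cong)
         apply (rule ext) apply (simp add: A_P[symmetric] act_assoc[OF HU] M_P)
        apply (rule ext) apply (simp add: A_P[symmetric] act_assoc[OF HV] M_P)
        done
    qed
    show "(dact X \<circ> (\<lambda>y. tens y (hA b)) \<circ> dact X \<circ> (\<lambda>x. tens x a)) (tens u v) =
         (dact X \<circ> (\<lambda>y. tens y (hM (tens a b))) \<circ> dal X) (tens u v)"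
      using fun_cong[OF gen, of "hD a"] unfolding X_def using assms lins
      by (simp add: tsimps actT_pure dalT_eq D_M)
  qed
  then show ?thesis by (metis comp_apply)
qed

end

lemma mid_tens_tmap2:
  fixes f :: "('a::finite \<Rightarrow> 'k::field) \<Rightarrow> ('a2::finite \<Rightarrow> 'k)" and g :: "('b::finite \<Rightarrow> 'k) \<Rightarrow> ('b2::finite \<Rightarrow> 'k)"
    and h :: "('c::finite \<Rightarrow> 'k) \<Rightarrow> ('c2::finite \<Rightarrow> 'k)" and k :: "('d::finite \<Rightarrow> 'k) \<Rightarrow> ('d2::finite \<Rightarrow> 'k)"
  assumes "lin f" "lin g" "lin h" "lin k"
  shows "mid (tens (tmap f g s) (tmap h k t)) = tmap (tmap f h) (tmap g k) (mid (tens s t))"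
  using assms by (simp add: tmap_tens[symmetric] tmap_mid)

lemma mid_tens_tmapL:
  fixes f :: "('a::finite \<Rightarrow> 'k::field) \<Rightarrow> ('a2::finite \<Rightarrow> 'k)" and g :: "('b::finite \<Rightarrow> 'k) \<Rightarrow> ('b2::finite \<Rightarrow> 'k)"
    and t :: "'c::finite \<times> 'd::finite \<Rightarrow> 'k"
  assumes "lin f" "lin g"
  shows "mid (tens (tmap f g s) t) = tmap (tmap f id) (tmap g id) (mid (tens s t))"
  using mid_tens_tmap2[OF assms lin_id lin_id, of s t] by (simp add: tmap_id_fun)

lemma mid_tens_tmapR:
  fixes h :: "('c::finite \<Rightarrow> 'k::field) \<Rightarrow> ('c2::finite \<Rightarrow> 'k)" and k :: "('d::finite \<Rightarrow> 'k) \<Rightarrow> ('d2::finite \<Rightarrow> 'k)"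
    and s :: "'a::finite \<times> 'b::finite \<Rightarrow> 'k"
  assumes "lin h" "lin k"
  shows "mid (tens s (tmap h k t)) = tmap (tmap id h) (tmap id k) (mid (tens s t))"
  using mid_tens_tmap2[OF lin_id lin_id assms, of s t] by (simp add: tmap_id_fun)

definition sw :: "(('a \<times> 'b) \<times> 'c \<Rightarrow> 'k) \<Rightarrow> (('a \<times> 'c) \<times> 'b \<Rightarrow> 'k)" where
  "sw w = (\<lambda>((a, c), b). w ((a, b), c))"
lemma lin_sw[simp]: "lin sw" by (auto simp: lin_def sw_def fun_eq_iff)
lemma sw_tens: "sw (tens (tens x y) (z::'c\<Rightarrow>'k::field)) = tens (tens x z) y"
  by (auto simp: sw_def tens_def fun_eq_iff mult_ac)

lemma tmap_act_sw:
  fixes F :: "('a::finite \<times> 'c::finite \<Rightarrow> 'k::field) \<Rightarrow> ('d \<Rightarrow> 'k)" and g :: "('b::finite \<Rightarrow> 'k) \<Rightarrow> ('e \<Rightarrow> 'k)"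
  assumes "lin F" "lin g"
  shows "tmap (\<lambda>x. F (tens x c)) g Y = tmap F g (sw (tens Y c))"
proof -
  have "lin (\<lambda>x. F (tens x c))" by (rule lin_comp'[OF assms(1) lin_tens1])
  then have "tmap (\<lambda>x. F (tens x c)) g = tmap F g \<circ> sw \<circ> (\<lambda>Y. tens Y c)"
    using assms by (intro lin_ext2) (simp_all add: tmap_tens sw_tens)
  then show ?thesis by (metis comp_apply)
qed

lemma tmap_scaleL: "tmap (\<lambda>y b. c * F y b) g w = (\<lambda>z. c * tmap F g w z)"
  by (auto simp: tmap_def fun_eq_iff)

lemma zpow_comm_self: "bij f \<Longrightarrow> zpow f n (f x) = f (zpow f n x)"
  using zpow_commute[of f f f] by simp

lemma zpow_tmap:
  fixes f :: "('a::finite \<Rightarrow> 'k::field) \<Rightarrow> ('a \<Rightarrow> 'k)" and g :: "('b::finite \<Rightarrow> 'k) \<Rightarrow> ('b \<Rightarrow> 'k)"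
  assumes "lin f" "bij f" "lin g" "bij g"
  shows "zpow (tmap f g) n w = tmap (zpow f n) (zpow g n) w"
proof (rule gen_commute[where f="\<lambda>x. x" and A="tmap f g" and B="tmap f g" and R="zpow (tmap f g)"
      and Q="\<lambda>n. tmap (zpow f n) (zpow g n)", simplified])
  show "\<And>n x. zpow (tmap f g) (n + 1) x = tmap f g (zpow (tmap f g) n x)"
    by (rule zpow_succ[OF bij_tmap[OF assms]])
  show "\<And>n x. tmap (zpow f (n + 1)) (zpow g (n + 1)) x = tmap f g (tmap (zpow f n) (zpow g n) x)"
  proof -
    fix n x
    have "zpow f (n+1) = f \<circ> zpow f n" "zpow g (n+1) = g \<circ> zpow g n"
      by (simp_all add: fun_eq_iff zpow_succ assms)
    then show "tmap (zpow f (n + 1)) (zpow g (n + 1)) x = tmap f g (tmap (zpow f n) (zpow g n) x)"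
      using assms by (simp add: tmap_comp_o lin_zpow)
  qed
qed (simp_all add: bij_is_inj bij_tmap assms zpow_0 zpow_0' tmap_id tmap_id')

context hb begin

lemma P_P[simp]: "P a (P b x) = P (a + b) x" by (simp add: P_add)
lemma A_as_P: "hA x = P 1 x" by (simp add: zpow_1)
lemma P_0[simp]: "P 0 x = x" by (simp add: zpow_0')
lemma inv_as_P: "inv hA x = P (-1) x" by (simp add: zpow_def)

lemma act_al_map:
  fixes U :: "('k, 'h, 'u::finite) dimod"
  assumes HU: "hom_long_dimod H U"
  shows "dact U (tmap (dal U) hA w) = dal U (dact U w)"
proof -
  have "dact U \<circ> tmap (dal U) hA = dal U \<circ> dact U"
    using HU by (intro lin_ext2) (simp_all add: lin_act lin_al tmap_tens act_al)
  then show ?thesis by (metis comp_apply)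
qed

lemma act_alP:
  fixes U :: "('k, 'h, 'u::finite) dimod"
  assumes HU: "hom_long_dimod H U"
  shows "zpow (dal U) n (dact U (tens u s)) = dact U (tens (zpow (dal U) n u) (P n s))"
proof -
  have "dact U (tmap (zpow (dal U) n) (P n) (tens u s)) = zpow (dal U) n (dact U (tens u s))"
  proof (rule gen_commute[where A="tmap (dal U) hA" and B="dal U"])
    show "\<And>n x. tmap (zpow (dal U) (n + 1)) (P (n + 1)) x = tmap (dal U) hA (tmap (zpow (dal U) n) (P n) x)"
    proof -
      fix n x
      have "zpow (dal U) (n+1) = dal U \<circ> zpow (dal U) n" "P (n+1) = hA \<circ> P n"
        using HU by (simp_all add: fun_eq_iff zpow_succ bij_al bij_A)
      then show "tmap (zpow (dal U) (n + 1)) (P (n + 1)) x = tmap (dal U) hA (tmap (zpow (dal U) n) (P n) x)"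
        using HU by (simp add: tmap_comp_o lin_zpow lin_al bij_al)
    qed
  qed (use HU in \<open>simp_all add: zpow_succ bij_al bij_is_inj zpow_0 zpow_0' tmap_id tmap_id' act_al_map\<close>)
  then show ?thesis using HU by (simp add: tmap_tens lin_zpow lin_al bij_al)
qed

lemma co_alP:
  fixes U :: "('k, 'h, 'u::finite) dimod"
  assumes HU: "hom_long_dimod H U"
  shows "dco U (zpow (dal U) n u) = tmap (zpow (dal U) n) (P n) (dco U u)"
proof (rule gen_commute[where A="dal U" and B="tmap (dal U) hA"])
  show "\<And>n x. tmap (zpow (dal U) (n + 1)) (P (n + 1)) x = tmap (dal U) hA (tmap (zpow (dal U) n) (P n) x)"
  proof -
    fix n x
    have "zpow (dal U) (n+1) = dal U \<circ> zpow (dal U) n" "P (n+1) = hA \<circ> P n"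
      using HU by (simp_all add: fun_eq_iff zpow_succ bij_al bij_A)
    then show "tmap (zpow (dal U) (n + 1)) (P (n + 1)) x = tmap (dal U) hA (tmap (zpow (dal U) n) (P n) x)"
      using HU by (simp add: tmap_comp_o lin_zpow lin_al bij_al)
  qed
qed (use HU in \<open>simp_all add: zpow_succ bij_al bij_is_inj zpow_0 zpow_0' tmap_id tmap_id' co_al bij_is_inj[OF bij_tmap[OF lin_al bij_al lin_A bij_A]]\<close>)

end

context hb begin

definition epsR :: "('x \<times> 'h \<Rightarrow> 'k) \<Rightarrow> ('x \<Rightarrow> 'k)" where
  "epsR w = (\<lambda>x. hE (\<lambda>h. w (x, h)))"

lemma linf_add: "hE (\<lambda>a. x a + y a) = hE x + hE y" and linf_scale: "hE (\<lambda>a. c * x a) = c * hE x"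
  using linf_E by (simp_all add: linf_def)

lemma lin_epsR[simp]: "lin epsR"
  by (simp add: lin_def epsR_def linf_add linf_scale)
lemma epsR_tens: "epsR (tens x c) = (\<lambda>a. x a * hE c)"
  by (simp add: epsR_def tens_def linf_scale)

context
  fixes U :: "('k, 'h, 'u::finite) dimod" and V :: "('k, 'h, 'v::finite) dimod" and i j :: int
  assumes HU: "hom_long_dimod H U" and HV: "hom_long_dimod H V"
begin

abbreviation "X \<equiv> tensor_dimod H i j U V"
lemmas lins = lin_act[OF HU] lin_act[OF HV] lin_al[OF HU] lin_al[OF HV] lin_co[OF HU] lin_co[OF HV]

lemma T_bij: "bij (dal X)"
  using HU HV by (simp add: dalT_eq bij_tmap lin_al bij_al)

lemma T_act_one: "dact X (tens x h1) = dal X x"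
proof -
  have "dact X \<circ> (\<lambda>x. tens x h1) = dal X"
    using HU HV lins by (intro lin_ext2) (simp_all add: tsimps actT_pure dalT_eq act_one)
  then show ?thesis by (metis comp_apply)
qed

lemma T_counit: "(\<lambda>x. hE (\<lambda>h. dco X w (x, h))) = dal X w"
proof -
  have c: "epsR \<circ> tmap id (hM \<circ> tmap (P i) (P j)) \<circ> mid
     = tmap (epsR :: ('u \<times> 'h \<Rightarrow> 'k) \<Rightarrow> _) (epsR :: ('v \<times> 'h \<Rightarrow> 'k) \<Rightarrow> _)"
    apply (rule lin_ext4) apply (simp_all add: tsimps epsR_tens E_M)
    apply (clarsimp simp: fun_eq_iff tens_def)
    done
  have "epsR \<circ> dco X = dal X"
  proof (rule lin_ext2)
    show "lin (epsR \<circ> dco X)" using HU HV by simp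
    show "lin (dal X)" using HU HV by simp
    fix u v
    have "epsR (dco X (tens u v)) = tmap epsR epsR (tens (dco U u) (dco V v))"
      using fun_cong[OF c, of "tens (dco U u) (dco V v)"] HU HV lins by (simp add: dcoT_eq tsimps)
    also have "\<dots> = tens (dal U u) (dal V v)"
      using co_counit[OF HU, of u] co_counit[OF HV, of v] by (simp add: tmap_tens) (simp add: epsR_def)
    finally show "(epsR \<circ> dco X) (tens u v) = dal X (tens u v)"
      using lins by (simp add: dalT_eq tmap_tens)
  qed
  then have "epsR (dco X w) = dal X w" by (metis comp_apply)
  then show ?thesis by (simp add: epsR_def)
qed

lemma T_act_al: "dal X (dact X (tens x h)) = dact X (tens (dal X x) (hA h))"
proof -
  have "dal X \<circ> dact X \<circ> (\<lambda>x. tens x h) = dact X \<circ> (\<lambda>y. tens y (hA h)) \<circ> dal X"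
    apply (rule lin_ext2)
    using HU HV lins apply simp_all
    apply (simp add: tsimps actT_pure dalT_eq D_A)
    apply (rule tmap_cong)
     apply (rule ext) apply (simp add: act_al[OF HU] A_P)
    apply (rule ext) apply (simp add: act_al[OF HV] A_P)
    done
  then show ?thesis by (metis comp_apply)
qed

lemma Mij_A: "hM \<circ> (tmap (P i) (P j) \<circ> tmap hA hA) = hA \<circ> (hM \<circ> tmap (P i) (P j))"
  by (rule lin_ext2) (simp_all add: tsimps A_M A_P)

lemma T_co_al: "dco X (dal X x) = tmap (dal X) hA (dco X x)"
proof -
  have "dco X \<circ> dal X = tmap (dal X) hA \<circ> dco X"
    apply (rule lin_ext2)
    using HU HV lins apply simp_all
    apply (simp add: tsimps dcoT_eq dalT_eq co_al mid_tens_tmap2)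
    apply (rule tmap_cong)
     apply simp
    apply (rule Mij_A)
    done
  then show ?thesis by (metis comp_apply)
qed

abbreviation "Mij \<equiv> hM \<circ> tmap (P i) (P j)"

lemma Mij_AA: "Mij (tens (hA x) (hA y)) = hA (Mij (tens x y))"
  by (simp add: tmap_tens A_M A_P)

lemma coT_pure: "dco X (tens u v) = tmap id Mij (mid (tens (dco U u) (dco V v)))"
  using lins by (simp add: dcoT_eq tmap_tens)

lemma T_coassoc_sub:
  "reassoc \<circ> (\<lambda>Y::('u\<times>'v)\<times>'h\<Rightarrow>'k. tens Y (hA (Mij (tens x y)))) \<circ> tmap id Mij \<circ> mid
     = tmap id (tmap Mij Mij \<circ> mid) \<circ> mid \<circ> tmap (reassoc \<circ> (\<lambda>S::'u\<times>'h\<Rightarrow>'k. tens S (hA x))) (reassoc \<circ> (\<lambda>T::'v\<times>'h\<Rightarrow>'k. tens T (hA y)))"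
  by (rule lin_ext4) (simp_all add: tsimps A_M A_P)

lemma T_coassoc: "tmap (dal X) hD (dco X w) = reassoc (tmap (dco X) hA (dco X w))"
proof -
  let ?Psi = "tmap id (tmap Mij Mij \<circ> mid) \<circ> mid"
  have L: "tmap (tmap (dal U) (dal V)) hD \<circ> tmap id Mij \<circ> mid = ?Psi \<circ> tmap (tmap (dal U) hD) (tmap (dal V) hD)"
    using lins by (intro lin_ext4) (simp_all add: tsimps D_M D_P mid_tens_tmap2)
  have R: "reassoc \<circ> tmap (dco X) hA \<circ> tmap id Mij \<circ> mid
     = ?Psi \<circ> tmap (reassoc \<circ> tmap (dco U) hA) (reassoc \<circ> tmap (dco V) hA)"
  proof (rule lin_ext4)
    show "lin (reassoc \<circ> tmap (dco X) hA \<circ> tmap id Mij \<circ> mid)" using HU HV by simp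
    show "lin (?Psi \<circ> tmap (reassoc \<circ> tmap (dco U) hA) (reassoc \<circ> tmap (dco V) hA))" using lins by simp
    fix u0 x v0 y
    show "(reassoc \<circ> tmap (dco X) hA \<circ> tmap id Mij \<circ> mid) (tens (tens u0 x) (tens v0 y)) =
         (?Psi \<circ> tmap (reassoc \<circ> tmap (dco U) hA) (reassoc \<circ> tmap (dco V) hA)) (tens (tens u0 x) (tens v0 y))"
    proof -
      have "(reassoc \<circ> tmap (dco X) hA \<circ> tmap id Mij \<circ> mid) (tens (tens u0 x) (tens v0 y))
        = (reassoc \<circ> (\<lambda>Y::('u\<times>'v)\<times>'h\<Rightarrow>'k. tens Y (hA (Mij (tens x y)))) \<circ> tmap id Mij \<circ> mid) (tens (dco U u0) (dco V v0))"
        using HU HV lins by (simp add: tsimps coT_pure)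
      also have "\<dots> = (tmap id (tmap Mij Mij \<circ> mid) \<circ> mid \<circ> tmap (reassoc \<circ> (\<lambda>S::'u\<times>'h\<Rightarrow>'k. tens S (hA x))) (reassoc \<circ> (\<lambda>T::'v\<times>'h\<Rightarrow>'k. tens T (hA y)))) (tens (dco U u0) (dco V v0))"
        by (simp only: T_coassoc_sub)
      also have "\<dots> = (?Psi \<circ> tmap (reassoc \<circ> tmap (dco U) hA) (reassoc \<circ> tmap (dco V) hA)) (tens (tens u0 x) (tens v0 y))"
        using HU HV lins by (simp add: tsimps)
      finally show ?thesis .
    qed
  qed
  have "tmap (dal X) hD \<circ> dco X = reassoc \<circ> tmap (dco X) hA \<circ> dco X"
  proof (rule lin_ext2)
    show "lin (tmap (dal X) hD \<circ> dco X)" using HU HV by simp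
    show "lin (reassoc \<circ> tmap (dco X) hA \<circ> dco X)" using HU HV by simp
    fix u v
    have "(tmap (dal X) hD \<circ> dco X) (tens u v)
        = (tmap (tmap (dal U) (dal V)) hD \<circ> tmap id Mij \<circ> mid) (tens (dco U u) (dco V v))"
      by (simp add: coT_pure dalT_eq)
    also have "\<dots> = ?Psi (tmap (tmap (dal U) hD) (tmap (dal V) hD) (tens (dco U u) (dco V v)))"
      using fun_cong[OF L] by simp
    also have "\<dots> = ?Psi (tmap (reassoc \<circ> tmap (dco U) hA) (reassoc \<circ> tmap (dco V) hA) (tens (dco U u) (dco V v)))"
      using lins by (simp only: tmap_tens lin_tmap lin_D lin_A lin_comp lin_reassoc co_coassoc[OF HU] co_coassoc[OF HV] comp_apply)
    also have "\<dots> = (reassoc \<circ> tmap (dco X) hA \<circ> tmap id Mij \<circ> mid) (tens (dco U u) (dco V v))"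
      using fun_cong[OF R] by simp
    also have "\<dots> = (reassoc \<circ> tmap (dco X) hA \<circ> dco X) (tens u v)"
      by (simp add: coT_pure)
    finally show "(tmap (dal X) hD \<circ> dco X) (tens u v) = (reassoc \<circ> tmap (dco X) hA \<circ> dco X) (tens u v)" .
  qed
  then show ?thesis by (metis comp_apply)
qed

lemma long_swU: "dco U (dact U (tens u c)) = tmap (dact U) hA (sw (tens (dco U u) (hA c)))"
  using HU by (simp add: long tmap_act_sw lin_act)
lemma long_swV: "dco V (dact V (tens u c)) = tmap (dact V) hA (sw (tens (dco V u) (hA c)))"
  using HV by (simp add: long tmap_act_sw lin_act)

lemma actX_sw:
  "tmap (dact X) hA (sw (tens Y c))
   = tmap (tmap (dact U) (dact V) \<circ> mid) hA (sw (tens Y (tmap (P (-i-2)) (P (-j-2)) (hD c))))"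
proof -
  have "tmap (dact X) hA \<circ> sw \<circ> (\<lambda>Y. tens Y c)
      = tmap (tmap (dact U) (dact V) \<circ> mid) hA \<circ> sw \<circ> (\<lambda>Y. tens Y (tmap (P (-i-2)) (P (-j-2)) (hD c)))"
    using HU HV lins by (intro lin_ext2) (simp_all add: tsimps sw_tens dactT_eq)
  then show ?thesis by (metis comp_apply)
qed

lemma T_long_sub:
  "tmap id Mij \<circ> mid \<circ> tmap (tmap (dact U) hA \<circ> sw \<circ> (\<lambda>S::'u\<times>'h\<Rightarrow>'k. tens S c1)) (tmap (dact V) hA \<circ> sw \<circ> (\<lambda>T::'v\<times>'h\<Rightarrow>'k. tens T c2))
   = tmap (tmap (dact U) (dact V) \<circ> mid) hA \<circ> sw \<circ> (\<lambda>Y. tens Y (tens c1 c2)) \<circ> tmap id Mij \<circ> mid"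
  using lins by (intro lin_ext4) (simp_all add: tsimps sw_tens A_M A_P)

lemma T_long: "dco X (dact X (tens x h)) = tmap (\<lambda>y. dact X (tens y (hA h))) hA (dco X x)"
proof -
  have "dco X \<circ> dact X \<circ> (\<lambda>x. tens x h) = tmap (dact X) hA \<circ> sw \<circ> (\<lambda>Y. tens Y (hA h)) \<circ> dco X"
  proof (rule lin_ext2)
    show "lin (dco X \<circ> dact X \<circ> (\<lambda>x. tens x h))" using HU HV by simp
    show "lin (tmap (dact X) hA \<circ> sw \<circ> (\<lambda>Y. tens Y (hA h)) \<circ> dco X)" using HU HV by simp
    fix u v
    let ?S = "dco U u" and ?T = "dco V v"
    let ?Fu = "dact U \<circ> (tens u \<circ> P (-i-2))" and ?Gv = "dact V \<circ> (tens v \<circ> P (-j-2))"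
    let ?Lam = "tmap id Mij \<circ> mid \<circ> tmap (tmap (dact U) hA \<circ> sw \<circ> tens ?S \<circ> hA \<circ> P (-i-2))
                                               (tmap (dact V) hA \<circ> sw \<circ> tens ?T \<circ> hA \<circ> P (-j-2))"
    let ?Om = "tmap (tmap (dact U) (dact V) \<circ> mid) hA \<circ> sw \<circ> (\<lambda>z. tens (tmap id Mij (mid (tens ?S ?T))) z)
               \<circ> tmap (P (-i-2) \<circ> hA) (P (-j-2) \<circ> hA)"
    have A: "dco X \<circ> tmap ?Fu ?Gv = ?Lam"
      using HU HV lins by (intro lin_ext2) (simp_all add: tsimps coT_pure long_swU long_swV)
    have B: "?Lam = ?Om"
    proof (rule lin_ext2)
      show "lin ?Lam" using lins by simp
      show "lin ?Om" using lins by simp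
      fix s t
      have "?Lam (tens s t) = (tmap id Mij \<circ> mid \<circ> tmap (tmap (dact U) hA \<circ> sw \<circ> (\<lambda>S::'u\<times>'h\<Rightarrow>'k. tens S (P (-i-2) (hA s))))
            (tmap (dact V) hA \<circ> sw \<circ> (\<lambda>T::'v\<times>'h\<Rightarrow>'k. tens T (P (-j-2) (hA t))))) (tens ?S ?T)"
        using lins by (simp add: tsimps A_P)
      also have "\<dots> = (tmap (tmap (dact U) (dact V) \<circ> mid) hA \<circ> sw \<circ> (\<lambda>Y. tens Y (tens (P (-i-2) (hA s)) (P (-j-2) (hA t))))
            \<circ> tmap id Mij \<circ> mid) (tens ?S ?T)"
        by (simp only: T_long_sub)
      also have "\<dots> = ?Om (tens s t)"
        using lins by (simp add: tsimps)
      finally show "?Lam (tens s t) = ?Om (tens s t)" .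
    qed
    have "(dco X \<circ> dact X \<circ> (\<lambda>x. tens x h)) (tens u v) = (dco X \<circ> tmap ?Fu ?Gv) (hD h)"
      using HU HV by (simp add: actT_pure)
    also have "\<dots> = ?Om (hD h)" using A B by simp
    also have "\<dots> = (tmap (dact X) hA \<circ> sw \<circ> (\<lambda>Y. tens Y (hA h)) \<circ> dco X) (tens u v)"
      using lins by (simp add: actX_sw coT_pure D_A tmap_comp_o)
    finally show "(dco X \<circ> dact X \<circ> (\<lambda>x. tens x h)) (tens u v) = (tmap (dact X) hA \<circ> sw \<circ> (\<lambda>Y. tens Y (hA h)) \<circ> dco X) (tens u v)" .
  qed
  then have "dco X (dact X (tens x h)) = tmap (dact X) hA (sw (tens (dco X x) (hA h)))" by (metis comp_apply)
  then show ?thesis using HU HV by (simp add: tmap_act_sw)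
qed

lemma T_dimod: "hom_long_dimod H X"
  unfolding hom_long_dimod_def Let_def
  using HU HV T_bij T_act_one T_counit T_act_al T_co_al T_coassoc T_long tensor_act_assoc[OF HU HV]
  by simp

end
end

context hb begin

lemma actk_tens: "dact (unit_dimod H) (tens u a) = (\<lambda>_. u () * hE a)"
  by (simp add: unit_dimod_def tens_def linf_scale)

lemma lin_actk_c: "lin (\<lambda>x::unit\<Rightarrow>'k. dact (unit_dimod H) (tens x c))"
  by (simp add: lin_def actk_tens fun_eq_iff algebra_simps)

lemma lin_unit_scal: "lin (\<lambda>(x::unit\<Rightarrow>'k) (_::unit). x () * c)"
  by (simp add: lin_def fun_eq_iff algebra_simps)

lemma unit_co: "dco (unit_dimod H) = (\<lambda>x. tens x h1)" and unit_al: "dal (unit_dimod H) = id"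
  by (simp_all add: unit_dimod_def)

lemma unit_dimod: "hom_long_dimod H (unit_dimod H)"
proof -
  have l1: "lin (dact (unit_dimod H))"
    by (simp add: unit_dimod_def lin_def linf_add linf_scale fun_eq_iff)
  have e: "\<And>u::unit\<Rightarrow>'k. (\<lambda>_. u ()) = u" by (simp add: fun_eq_iff)
  show ?thesis
    unfolding hom_long_dimod_def Let_def unit_co unit_al
    apply (intro conjI allI)
    using l1 apply (simp_all add: actk_tens E_M lin_actk_c tmap_tens reassoc_tens lin_tens1 bij_id e lin_unit_scal)
    apply (simp_all add: tens_def linf_scale fun_eq_iff)
    done
qed

lemma tmap_mor:
  fixes U :: "('k, 'h, 'u1::finite) dimod" and U' :: "('k, 'h, 'u2::finite) dimod"
    and V :: "('k, 'h, 'v1::finite) dimod" and V' :: "('k, 'h, 'v2::finite) dimod"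
  assumes HU: "hom_long_dimod H U" and HU': "hom_long_dimod H U'"
    and HV: "hom_long_dimod H V" and HV': "hom_long_dimod H V'"
    and f: "ld_mor H U U' f" and g: "ld_mor H V V' g"
  shows "ld_mor H (tensor_dimod H i j U V) (tensor_dimod H i j U' V') (tmap f g)"
proof -
  have lf: "lin f" and fa: "\<And>u. f (dal U u) = dal U' (f u)"
    and fact: "\<And>u h. f (dact U (tens u h)) = dact U' (tens (f u) h)"
    and fco: "\<And>u. dco U' (f u) = tmap f id (dco U u)"
    using f by (simp_all add: ld_mor_def)
  have lg: "lin g" and ga: "\<And>u. g (dal V u) = dal V' (g u)"
    and gact: "\<And>u h. g (dact V (tens u h)) = dact V' (tens (g u) h)"
    and gco: "\<And>u. dco V' (g u) = tmap g id (dco V u)"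
    using g by (simp_all add: ld_mor_def)
  note lins = lin_act[OF HU] lin_act[OF HV] lin_al[OF HU] lin_al[OF HV] lin_co[OF HU] lin_co[OF HV]
     lin_act[OF HU'] lin_act[OF HV'] lin_al[OF HU'] lin_al[OF HV'] lin_co[OF HU'] lin_co[OF HV'] lf lg
  have a1: "f \<circ> dal U = dal U' \<circ> f" "g \<circ> dal V = dal V' \<circ> g" using fa ga by (simp_all add: fun_eq_iff)
  have A: "\<And>w. tmap f g (dal (tensor_dimod H i j U V) w) = dal (tensor_dimod H i j U' V') (tmap f g w)"
    using lins a1 by (simp add: dalT_eq tmap_comp_o)
  have B: "\<And>w h. tmap f g (dact (tensor_dimod H i j U V) (tens w h)) = dact (tensor_dimod H i j U' V') (tens (tmap f g w) h)"
  proof -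
    fix w h
    have "tmap f g \<circ> dact (tensor_dimod H i j U V) \<circ> (\<lambda>w. tens w h) = dact (tensor_dimod H i j U' V') \<circ> (\<lambda>w. tens w h) \<circ> tmap f g"
      apply (rule lin_ext2)
      using HU HV HU' HV' lins apply simp_all
      apply (simp add: tsimps actT_pure)
      apply (rule tmap_cong)
       apply (rule ext) apply (simp add: fact)
      apply (rule ext) apply (simp add: gact)
      done
    then show "tmap f g (dact (tensor_dimod H i j U V) (tens w h)) = dact (tensor_dimod H i j U' V') (tens (tmap f g w) h)"
      by (metis comp_apply)
  qed
  have C: "\<And>w. dco (tensor_dimod H i j U' V') (tmap f g w) = tmap (tmap f g) id (dco (tensor_dimod H i j U V) w)"
  proof -
    fix w
    have "dco (tensor_dimod H i j U' V') \<circ> tmap f g = tmap (tmap f g) id \<circ> dco (tensor_dimod H i j U V)"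
      apply (rule lin_ext2)
      using HU HV HU' HV' lins apply simp_all
      apply (simp add: tsimps dcoT_eq fco gco mid_tens_tmap2 tmap_id_fun)
      done
    then show "dco (tensor_dimod H i j U' V') (tmap f g w) = tmap (tmap f g) id (dco (tensor_dimod H i j U V) w)"
      by (metis comp_apply)
  qed
  show ?thesis unfolding ld_mor_def using A B C lf lg by simp
qed

lemma inv_mor:
  fixes X :: "('k, 'h, 'x1::finite) dimod" and Y :: "('k, 'h, 'x2::finite) dimod"
  assumes f: "ld_mor H X Y f" and b: "bij f"
  shows "ld_mor H Y X (inv f)"
proof -
  have lf: "lin f" and fa: "\<And>u. f (dal X u) = dal Y (f u)"
    and fact: "\<And>u h. f (dact X (tens u h)) = dact Y (tens (f u) h)"
    and fco: "\<And>u. dco Y (f u) = tmap f id (dco X u)"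
    using f by (simp_all add: ld_mor_def)
  have s: "\<And>x. f (inv f x) = x" and i: "\<And>x. inv f (f x) = x"
    using b by (simp_all add: bij_is_surj bij_is_inj surj_f_inv_f inv_f_f)
  have li: "lin (inv f)" by (rule lin_inv[OF lf b])
  have A: "\<And>y. inv f (dal Y y) = dal X (inv f y)" by (metis fa i s)
  have B: "\<And>y h. inv f (dact Y (tens y h)) = dact X (tens (inv f y) h)" by (metis fact i s)
  have C: "\<And>y. dco X (inv f y) = tmap (inv f) id (dco Y y)"
  proof -
    fix y
    have "tmap (inv f) id (dco Y y) = tmap (inv f) id (tmap f id (dco X (inv f y)))"
      using fco[of "inv f y"] s by simp
    also have "\<dots> = dco X (inv f y)"
      using li lf by (simp add: tmap_comp_o comp_def i tmap_id')
    finally show "dco X (inv f y) = tmap (inv f) id (dco Y y)" by simp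
  qed
  show ?thesis unfolding ld_mor_def using li A B C by simp
qed

end

definition unassoc :: "('a \<times> ('b \<times> 'c) \<Rightarrow> 'k) \<Rightarrow> (('a \<times> 'b) \<times> 'c \<Rightarrow> 'k)" where
  "unassoc w = (\<lambda>((a, b), c). w (a, b, c))"
lemma bij_reassoc: "bij reassoc"
  by (rule o_bij[where g=unassoc]) (auto simp: fun_eq_iff reassoc_def unassoc_def)

lemma lin_ext6:
  fixes F G :: "((('a::finite \<times> 'b::finite) \<times> ('c::finite \<times> 'd::finite)) \<times> ('e::finite \<times> 'f::finite) \<Rightarrow> 'k::field) \<Rightarrow> ('g \<Rightarrow> 'k)"
  assumes "lin F" "lin G" "\<And>a b c d e f. F (tens (tens (tens a b) (tens c d)) (tens e f)) = G (tens (tens (tens a b) (tens c d)) (tens e f))"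
  shows "F = G"
proof (rule lin_ext2[OF assms(1,2)])
  fix x y
  have "F \<circ> (\<lambda>x. tens x y) = G \<circ> (\<lambda>x. tens x y)"
  proof (rule lin_ext4)
    show "lin (F \<circ> (\<lambda>x. tens x y))" "lin (G \<circ> (\<lambda>x. tens x y))" using assms(1,2) by simp_all
    fix a b c d
    have "F \<circ> tens (tens (tens a b) (tens c d)) = G \<circ> tens (tens (tens a b) (tens c d))"
      using assms by (intro lin_ext2) simp_all
    then show "(F \<circ> (\<lambda>x. tens x y)) (tens (tens a b) (tens c d)) = (G \<circ> (\<lambda>x. tens x y)) (tens (tens a b) (tens c d))"
      by (metis comp_apply)
  qed
  then show "F (tens x y) = G (tens x y)" by (metis comp_apply)
qed

context hb begin

lemma coassoc': "tmap id hD (hD c) = reassoc (tmap (tmap (P (-1)) id) hA (tmap hD id (hD c)))"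
proof -
  have i1: "P (-1) \<circ> hA = id" by (simp add: fun_eq_iff A_as_P)
  have "tmap id hD (hD c) = tmap (P (-1)) id (tmap hA hD (hD c))" by (simp add: tmap_comp_o i1)
  also have "\<dots> = tmap (P (-1)) id (reassoc (tmap hD hA (hD c)))" using D_coassoc by simp
  also have "\<dots> = reassoc (tmap (tmap (P (-1)) id) id (tmap hD hA (hD c)))" by (simp add: tmap_reassoc tmap_id_fun)
  also have "\<dots> = reassoc (tmap (tmap (P (-1)) id) hA (tmap hD id (hD c)))" by (simp add: tmap_comp_o)
  finally show ?thesis .
qed

lemma amap_eq: "amap i j aU aW = reassoc \<circ> tmap (tmap (zpow aU (i+1)) id) (zpow aW (-j-1))"
  by (simp add: amap_def fun_eq_iff)

context
  fixes U :: "('k, 'h, 'u::finite) dimod" and V :: "('k, 'h, 'v::finite) dimod"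
    and W :: "('k, 'h, 'w::finite) dimod" and i j :: int
  assumes HU: "hom_long_dimod H U" and HV: "hom_long_dimod H V" and HW: "hom_long_dimod H W"
begin

abbreviation "QU \<equiv> zpow (dal U) (i+1)"
abbreviation "QW \<equiv> zpow (dal W) (-j-1)"
abbreviation "am \<equiv> amap i j (dal U) (dal W)"
abbreviation "XW \<equiv> tensor_dimod H i j (tensor_dimod H i j U V) W"
abbreviation "UVW \<equiv> tensor_dimod H i j U (tensor_dimod H i j V W)"

lemmas lins3 = lin_act[OF HU] lin_act[OF HV] lin_act[OF HW] lin_al[OF HU] lin_al[OF HV] lin_al[OF HW]
  lin_co[OF HU] lin_co[OF HV] lin_co[OF HW]
  lin_zpow[OF lin_al[OF HU] bij_al[OF HU]] lin_zpow[OF lin_al[OF HV] bij_al[OF HV]] lin_zpow[OF lin_al[OF HW] bij_al[OF HW]]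

lemma HUV: "hom_long_dimod H (tensor_dimod H i j U V)" by (rule T_dimod[OF HU HV])
lemma HVW: "hom_long_dimod H (tensor_dimod H i j V W)" by (rule T_dimod[OF HV HW])

lemma lin_am[simp]: "lin am" using lins3 by (simp add: amap_eq)

lemma am_al: "am (dal XW z) = dal UVW (am z)"
proof -
  have "am \<circ> dal XW = dal UVW \<circ> am"
    using lins3 HU HV HW
    by (intro lin_ext3) (simp_all add: tsimps amap_eq dalT_eq zpow_comm_self bij_al)
  then show ?thesis by (metis comp_apply)
qed

lemma am_act: "am (dact XW (tens z h)) = dact UVW (tens (am z) h)"
proof -
  let ?p = "-i-2" and ?q = "-j-2"
  have "am \<circ> dact XW \<circ> (\<lambda>z. tens z h) = dact UVW \<circ> (\<lambda>z. tens z h) \<circ> am"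
  proof (rule lin_ext3)
    show "lin (am \<circ> dact XW \<circ> (\<lambda>z. tens z h))" using HU HV HW HUV by simp
    show "lin (dact UVW \<circ> (\<lambda>z. tens z h) \<circ> am)" using HU HV HW HVW by simp
    fix u v w
    let ?Phi1 = "reassoc \<circ> tmap (tmap (QU \<circ> dact U \<circ> tens u \<circ> P ?p \<circ> P ?p) (dact V \<circ> tens v \<circ> P ?q \<circ> P ?p))
                                 (QW \<circ> dact W \<circ> tens w \<circ> P ?q)"
    let ?Phi2 = "tmap (dact U \<circ> tens (QU u) \<circ> P ?p) (tmap (dact V \<circ> tens v \<circ> P ?p \<circ> P ?q) (dact W \<circ> tens (QW w) \<circ> P ?q \<circ> P ?q))"
    have L1: "am \<circ> tmap (dact (tensor_dimod H i j U V) \<circ> (tens (tens u v) \<circ> P ?p)) (dact W \<circ> (tens w \<circ> P ?q))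
         = ?Phi1 \<circ> tmap hD id"
      using HU HV HW HUV lins3 by (intro lin_ext2) (simp_all add: tsimps amap_eq actT_pure D_P)
    have R1: "tmap (dact U \<circ> (tens (QU u) \<circ> P ?p)) (dact (tensor_dimod H i j V W) \<circ> (tens (tens v (QW w)) \<circ> P ?q))
         = ?Phi2 \<circ> tmap id hD"
      using HU HV HW HVW lins3 by (intro lin_ext2) (simp_all add: tsimps actT_pure D_P)
    have C: "?Phi1 = ?Phi2 \<circ> reassoc \<circ> tmap (tmap (P (-1)) id) hA"
      using HU HV HW lins3 apply (intro lin_ext3) apply (simp_all add: tsimps act_alP)
      apply (simp add: A_as_P)
      apply (smt (verit))
      done
    have "(am \<circ> dact XW \<circ> (\<lambda>z. tens z h)) (tens (tens u v) w) = ?Phi1 (tmap hD id (hD h))"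
      using fun_cong[OF L1, of "hD h"] HU HV HW HUV by (simp add: actT_pure)
    also have "\<dots> = ?Phi2 (tmap id hD (hD h))"
      using fun_cong[OF C, of "tmap hD id (hD h)"] by (simp add: coassoc')
    also have "\<dots> = (dact UVW \<circ> (\<lambda>z. tens z h) \<circ> am) (tens (tens u v) w)"
      using fun_cong[OF R1, of "hD h"] HU HV HW HVW lins3 by (simp add: actT_pure amap_eq tsimps)
    finally show "(am \<circ> dact XW \<circ> (\<lambda>z. tens z h)) (tens (tens u v) w) = (dact UVW \<circ> (\<lambda>z. tens z h) \<circ> am) (tens (tens u v) w)" .
  qed
  then show ?thesis by (metis comp_apply)
qed

lemma M_assoc_P: "hM (tens (P (1 + a) x) (hM (tens (P b y) (P c z)))) = hM (tens (hM (tens (P a x) (P b y))) (P (1 + c) z))"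
  using M_assoc[of "P a x" "P b y" "P c z"] by (simp add: A_as_P)

lemma am_co: "dco UVW (am z) = tmap am id (dco XW z)"
proof -
  let ?M = "hM \<circ> tmap (P i) (P j)"
  let ?LF = "tmap id ?M \<circ> mid \<circ> tmap (tmap QU (P (i+1))) (tmap (id::('v\<times>'w\<Rightarrow>'k)\<Rightarrow>_) ?M \<circ> mid \<circ> tmap (id::('v\<times>'h\<Rightarrow>'k)\<Rightarrow>_) (tmap QW (P (-j-1)))) \<circ> reassoc"
  let ?RF = "tmap am id \<circ> tmap id ?M \<circ> mid \<circ> tmap (tmap id ?M \<circ> mid) id"
  have E: "?LF = ?RF"
  proof (rule lin_ext6)
    show "lin ?LF" using lins3 by simp
    show "lin ?RF" using lins3 by simp
    fix u0 x v0 y w0 z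
    show "?LF (tens (tens (tens u0 x) (tens v0 y)) (tens w0 z)) = ?RF (tens (tens (tens u0 x) (tens v0 y)) (tens w0 z))"
      using lins3 M_assoc_P[of "i+i" x "i+j" y "j-1" z]
      apply (simp add: tsimps amap_eq M_P[symmetric] A_as_P)
      apply (smt (verit))
      done
  qed
  have "dco UVW \<circ> am = tmap am id \<circ> dco XW"
  proof (rule lin_ext3)
    show "lin (dco UVW \<circ> am)" using HU HV HW HVW by simp
    show "lin (tmap am id \<circ> dco XW)" using HU HV HW HUV by simp
    fix u v w
    have "(dco UVW \<circ> am) (tens (tens u v) w) = ?LF (tens (tens (dco U u) (dco V v)) (dco W w))"
      using HU HV HW HVW lins3 by (simp add: tsimps amap_eq coT_pure co_alP)
    also have "\<dots> = ?RF (tens (tens (dco U u) (dco V v)) (dco W w))" using E by simp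
    also have "\<dots> = (tmap am id \<circ> dco XW) (tens (tens u v) w)"
      using HU HV HW HUV lins3 by (simp add: tsimps coT_pure)
    finally show "(dco UVW \<circ> am) (tens (tens u v) w) = (tmap am id \<circ> dco XW) (tens (tens u v) w)" .
  qed
  then show ?thesis by (metis comp_apply)
qed

lemma bij_am: "bij (am :: (('u \<times> 'v) \<times> 'w \<Rightarrow> 'k) \<Rightarrow> _)"
proof -
  have "bij (tmap (tmap QU id) QW :: ((('u \<times> 'v) \<times> 'w) \<Rightarrow> 'k) \<Rightarrow> _)"
    using HU HW
    by (intro bij_tmap lin_tmap) (simp_all add: lin_zpow bij_zpow bij_al lin_al bij_id)
  from bij_comp[OF this bij_reassoc] show ?thesis by (simp add: amap_eq)
qed

lemma am_mor: "ld_mor H XW UVW am"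
  unfolding ld_mor_def using am_al am_act am_co by simp


end

end

definition cL :: "(unit \<times> 'x \<Rightarrow> 'k) \<Rightarrow> ('x \<Rightarrow> 'k)" where "cL w = (\<lambda>x. w ((), x))"
definition cR :: "('x \<times> unit \<Rightarrow> 'k) \<Rightarrow> ('x \<Rightarrow> 'k)" where "cR w = (\<lambda>x. w (x, ()))"

lemma lin_cL[simp]: "lin cL" and lin_cR[simp]: "lin cR" by (simp_all add: lin_def cL_def cR_def)
lemma cL_tens: "cL (tens c x) = (\<lambda>b. c () * x b)" by (simp add: cL_def tens_def)
lemma cR_tens: "cR (tens (x::'a\<Rightarrow>'k::field) c) = (\<lambda>b. c () * x b)" by (simp add: cR_def tens_def mult.commute)
lemma bij_cL: "bij cL"
  by (rule o_bij[where g="\<lambda>v (_, x). v x"]) (auto simp: fun_eq_iff cL_def)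
lemma bij_cR: "bij cR"
  by (rule o_bij[where g="\<lambda>v (x, _). v x"]) (auto simp: fun_eq_iff cR_def)
lemma lmap_eq: "lmap j aX = zpow aX (j+1) \<circ> cL" by (simp add: fun_eq_iff lmap_def cL_def)
lemma rmap_eq: "rmap i aX = zpow aX (i+1) \<circ> cR" by (simp add: fun_eq_iff rmap_def cR_def)

lemma lin_scal_fun[simp]: "lin (\<lambda>(y::'a\<Rightarrow>'k::field) b. c * y b)"
  by (simp add: lin_def fun_eq_iff algebra_simps)

lemma mid_tens_right:
  fixes t :: "'a::finite \<times> 'b::finite \<Rightarrow> 'k::field" and u :: "'c \<Rightarrow> 'k" and v :: "'d \<Rightarrow> 'k"
  shows "mid (tens t (tens u v)) = tmap (\<lambda>y. tens y u) (\<lambda>s. tens s v) t"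
proof -
  have "mid \<circ> (\<lambda>t::'a\<times>'b\<Rightarrow>'k. tens t (tens u v)) = tmap (\<lambda>y. tens y u) (\<lambda>s. tens s v)"
    by (rule lin_ext2) (simp_all add: tmap_tens mid_tens)
  then show ?thesis by (metis comp_apply)
qed

context hb begin

definition epsL :: "('h \<times> 'x \<Rightarrow> 'k) \<Rightarrow> ('x \<Rightarrow> 'k)" where
  "epsL w = (\<lambda>x. hE (\<lambda>h. w (h, x)))"
lemma lin_epsL[simp]: "lin epsL"
  by (simp add: lin_def epsL_def linf_add linf_scale)
lemma epsL_tens: "epsL (tens c x) = (\<lambda>a. hE c * x a)"
proof (rule ext)
  fix a
  have 1: "(\<lambda>h. tens c x (h, a)) = (\<lambda>h. x a * c h)" by (simp add: tens_def fun_eq_iff mult.commute)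
  have "epsL (tens c x) a = hE (\<lambda>h. tens c x (h, a))" by (simp add: epsL_def)
  also have "\<dots> = hE (\<lambda>h. x a * c h)" by (simp only: 1)
  also have "\<dots> = x a * hE c" by (rule linf_scale)
  finally show "epsL (tens c x) a = hE c * x a" by (simp add: mult.commute)
qed
lemma epsL_D: "epsL (hD h) = hA h" using counitL by (simp add: epsL_def)
lemma epsR_D: "epsR (hD h) = hA h" using counitR by (simp add: epsR_def)

context
  fixes X :: "('k, 'h, 'x::finite) dimod" and i j :: int
  assumes HX: "hom_long_dimod H X"
begin

abbreviation "UX \<equiv> tensor_dimod H i j (unit_dimod H) X"
abbreviation "XU \<equiv> tensor_dimod H i j X (unit_dimod H)"
abbreviation "lm \<equiv> lmap j (dal X)"
abbreviation "rm \<equiv> rmap i (dal X)"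

lemmas linsX = lin_act[OF HX] lin_al[OF HX] lin_co[OF HX] lin_zpow[OF lin_al[OF HX] bij_al[OF HX]]
  lin_act[OF unit_dimod] lin_co[OF unit_dimod] lin_al[OF unit_dimod]

lemma HUX: "hom_long_dimod H UX" by (rule T_dimod[OF unit_dimod HX])
lemma HXU: "hom_long_dimod H XU" by (rule T_dimod[OF HX unit_dimod])

lemma lin_lm[simp]: "lin lm" using linsX by (simp add: lmap_eq)
lemma lin_rm[simp]: "lin rm" using linsX by (simp add: rmap_eq)

lemma zpowX_scale: "zpow (dal X) n (\<lambda>b. c * y b) = (\<lambda>b. c * zpow (dal X) n y b)"
  using lin_scale[OF lin_zpow[OF lin_al[OF HX] bij_al[OF HX]]] by simp

lemma lm_al: "lm (dal UX w) = dal X (lm w)"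
proof -
  have "lm \<circ> dal UX = dal X \<circ> lm"
    using linsX HX
    by (intro lin_ext2) (simp_all add: tsimps lmap_eq dalT_eq unit_al cL_tens zpow_comm_self bij_al lin_scale)
  then show ?thesis by (metis comp_apply)
qed

lemma rm_al: "rm (dal XU w) = dal X (rm w)"
proof -
  have "rm \<circ> dal XU = dal X \<circ> rm"
    using linsX HX
    by (intro lin_ext2) (simp_all add: tsimps rmap_eq dalT_eq unit_al cR_tens zpow_comm_self bij_al lin_scale)
  then show ?thesis by (metis comp_apply)
qed

lemma tens_scaleL: "tens (\<lambda>b. c * (y::'a\<Rightarrow>'k::field) b) z = (\<lambda>w. c * tens y z w)"
  by (auto simp: tens_def fun_eq_iff mult.assoc)
lemma tens_scaleR: "tens z (\<lambda>b. c * (y::'a\<Rightarrow>'k::field) b) = (\<lambda>w. c * tens z y w)"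
  by (auto simp: tens_def fun_eq_iff mult_ac)

lemma actX_scale: "dact X (\<lambda>w. c * Y w) = (\<lambda>b. c * dact X Y b)"
  using lin_scale[OF lin_act[OF HX]] by simp

lemma GL:
  fixes G :: "('h \<Rightarrow> 'k) \<Rightarrow> ('x \<Rightarrow> 'k)"
  assumes lG: "lin G"
  shows "cL \<circ> tmap (dact (unit_dimod H) \<circ> (tens c \<circ> P n)) G = G \<circ> (\<lambda>y b. c () * y b) \<circ> epsL"
proof (rule lin_ext2)
  show "lin (cL \<circ> tmap (dact (unit_dimod H) \<circ> (tens c \<circ> P n)) G)" using lG linsX by simp
  show "lin (G \<circ> (\<lambda>y b. c () * y b) \<circ> epsL)" using lG by simp
  fix s t
  have "G (\<lambda>b. c () * (hE s * t b)) = G (\<lambda>b. (c () * hE s) * t b)" by (simp add: mult.assoc)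
  also have "\<dots> = (\<lambda>b. (c () * hE s) * G t b)" by (rule lin_scale[OF lG])
  finally have e: "G (\<lambda>b. c () * (hE s * t b)) = (\<lambda>b. (c () * hE s) * G t b)" .
  show "(cL \<circ> tmap (dact (unit_dimod H) \<circ> (tens c \<circ> P n)) G) (tens s t) = (G \<circ> (\<lambda>y b. c () * y b) \<circ> epsL) (tens s t)"
    using lG linsX by (simp add: tmap_tens cL_tens actk_tens epsL_tens e)
qed

lemma GR:
  fixes F :: "('h \<Rightarrow> 'k) \<Rightarrow> ('x \<Rightarrow> 'k)"
  assumes lF: "lin F"
  shows "cR \<circ> tmap F (dact (unit_dimod H) \<circ> (tens c \<circ> P n)) = F \<circ> (\<lambda>y b. c () * y b) \<circ> epsR"
proof (rule lin_ext2)
  show "lin (cR \<circ> tmap F (dact (unit_dimod H) \<circ> (tens c \<circ> P n)))" using lF linsX by simp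
  show "lin (F \<circ> (\<lambda>y b. c () * y b) \<circ> epsR)" using lF by simp
  fix s t
  have "F (\<lambda>b. c () * (s b * hE t)) = F (\<lambda>b. (c () * hE t) * s b)" by (simp add: mult_ac)
  also have "\<dots> = (\<lambda>b. (c () * hE t) * F s b)" by (rule lin_scale[OF lF])
  finally have e: "F (\<lambda>b. c () * (s b * hE t)) = (\<lambda>b. (c () * hE t) * F s b)" .
  show "(cR \<circ> tmap F (dact (unit_dimod H) \<circ> (tens c \<circ> P n))) (tens s t) = (F \<circ> (\<lambda>y b. c () * y b) \<circ> epsR) (tens s t)"
    using lF linsX by (simp add: tmap_tens cR_tens actk_tens epsR_tens e)
qed

lemma lm_act: "lm (dact UX (tens w h)) = dact X (tens (lm w) h)"
proof -
  have "lm \<circ> dact UX \<circ> (\<lambda>w. tens w h) = dact X \<circ> (\<lambda>w. tens w h) \<circ> lm"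
  proof (rule lin_ext2)
    show "lin (lm \<circ> dact UX \<circ> (\<lambda>w. tens w h))" using HX unit_dimod by simp
    show "lin (dact X \<circ> (\<lambda>w. tens w h) \<circ> lm)" using linsX by simp
    fix c x
    let ?G = "dact X \<circ> (tens x \<circ> P (-j-2))"
    have lG: "lin ?G" using linsX by simp
    have "(lm \<circ> dact UX \<circ> (\<lambda>w. tens w h)) (tens c x) = zpow (dal X) (j+1) ((cL \<circ> tmap (dact (unit_dimod H) \<circ> (tens c \<circ> P (-i-2))) ?G) (hD h))"
      using HX unit_dimod by (simp add: actT_pure lmap_eq)
    also have "\<dots> = zpow (dal X) (j+1) (?G (\<lambda>b. c () * hA h b))"
      by (simp only: GL[OF lG]) (simp add: epsL_D)
    also have "\<dots> = (\<lambda>b. c () * zpow (dal X) (j+1) (?G (hA h)) b)"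
    proof -
      have sc: "dact X (tens x (P (-j-2) (\<lambda>b. c () * hA h b))) = (\<lambda>b. c () * dact X (tens x (P (-j-2) (hA h))) b)"
        using lin_scale[OF lG, of "c ()" "hA h"] by (simp only: comp_apply)
      show ?thesis by (simp add: sc zpowX_scale)
    qed
    also have "\<dots> = (\<lambda>b. c () * dact X (tens (zpow (dal X) (j+1) x) h) b)"
      using HX by (simp add: act_alP A_as_P)
    also have "\<dots> = (dact X \<circ> (\<lambda>w. tens w h) \<circ> lm) (tens c x)"
      by (simp add: lmap_eq cL_tens zpowX_scale tens_scaleL actX_scale)
    finally show "(lm \<circ> dact UX \<circ> (\<lambda>w. tens w h)) (tens c x) = (dact X \<circ> (\<lambda>w. tens w h) \<circ> lm) (tens c x)" .
  qed
  then show ?thesis by (metis comp_apply)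
qed

lemma rm_act: "rm (dact XU (tens w h)) = dact X (tens (rm w) h)"
proof -
  have "rm \<circ> dact XU \<circ> (\<lambda>w. tens w h) = dact X \<circ> (\<lambda>w. tens w h) \<circ> rm"
  proof (rule lin_ext2)
    show "lin (rm \<circ> dact XU \<circ> (\<lambda>w. tens w h))" using HX unit_dimod by simp
    show "lin (dact X \<circ> (\<lambda>w. tens w h) \<circ> rm)" using linsX by simp
    fix x c
    let ?F = "dact X \<circ> (tens x \<circ> P (-i-2))"
    have lF: "lin ?F" using linsX by simp
    have "(rm \<circ> dact XU \<circ> (\<lambda>w. tens w h)) (tens x c) = zpow (dal X) (i+1) ((cR \<circ> tmap ?F (dact (unit_dimod H) \<circ> (tens c \<circ> P (-j-2)))) (hD h))"
      using HX unit_dimod by (simp add: actT_pure rmap_eq)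
    also have "\<dots> = zpow (dal X) (i+1) (?F (\<lambda>b. c () * hA h b))"
      by (simp only: GR[OF lF]) (simp add: epsR_D)
    also have "\<dots> = (\<lambda>b. c () * zpow (dal X) (i+1) (?F (hA h)) b)"
    proof -
      have sc: "dact X (tens x (P (-i-2) (\<lambda>b. c () * hA h b))) = (\<lambda>b. c () * dact X (tens x (P (-i-2) (hA h))) b)"
        using lin_scale[OF lF, of "c ()" "hA h"] by (simp only: comp_apply)
      show ?thesis by (simp add: sc zpowX_scale)
    qed
    also have "\<dots> = (\<lambda>b. c () * dact X (tens (zpow (dal X) (i+1) x) h) b)"
      using HX by (simp add: act_alP A_as_P)
    also have "\<dots> = (dact X \<circ> (\<lambda>w. tens w h) \<circ> rm) (tens x c)"
      by (simp add: rmap_eq cR_tens zpowX_scale tens_scaleL actX_scale)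
    finally show "(rm \<circ> dact XU \<circ> (\<lambda>w. tens w h)) (tens x c) = (dact X \<circ> (\<lambda>w. tens w h) \<circ> rm) (tens x c)" .
  qed
  then show ?thesis by (metis comp_apply)
qed

lemma coX_scale: "dco X (\<lambda>b. c * y b) = (\<lambda>z. c * dco X y z)"
  using lin_scale[OF lin_co[OF HX]] by simp

lemma lm_co: "dco X (lm w) = tmap lm id (dco UX w)"
proof -
  have "dco X \<circ> lm = tmap lm id \<circ> dco UX"
  proof (rule lin_ext2)
    show "lin (dco X \<circ> lm)" using linsX by simp
    show "lin (tmap lm id \<circ> dco UX)" using HX unit_dimod by simp
    fix c x
    have f1: "lm \<circ> tens c = (\<lambda>y b. c () * zpow (dal X) (j+1) y b)"
      by (simp add: fun_eq_iff lmap_eq cL_tens zpowX_scale)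
    have f2: "hM \<circ> (tmap (P i) (P j) \<circ> tens h1) = P (j+1)"
      by (simp add: fun_eq_iff tmap_tens M_unitL A_as_P add.commute)
    have "(tmap lm id \<circ> dco UX) (tens c x) = tmap (lm \<circ> tens c) (hM \<circ> (tmap (P i) (P j) \<circ> tens h1)) (dco X x)"
      using HX unit_dimod linsX by (simp add: coT_pure unit_co tsimps)
    also have "\<dots> = (\<lambda>z. c () * tmap (zpow (dal X) (j+1)) (P (j+1)) (dco X x) z)"
      by (simp only: f1 f2 tmap_scaleL)
    also have "\<dots> = (dco X \<circ> lm) (tens c x)"
      using HX linsX by (simp add: lmap_eq cL_tens zpowX_scale co_alP coX_scale lin_scale)
    finally show "(dco X \<circ> lm) (tens c x) = (tmap lm id \<circ> dco UX) (tens c x)" by simp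
  qed
  then show ?thesis by (metis comp_apply)
qed

lemma rm_co: "dco X (rm w) = tmap rm id (dco XU w)"
proof -
  have "dco X \<circ> rm = tmap rm id \<circ> dco XU"
  proof (rule lin_ext2)
    show "lin (dco X \<circ> rm)" using linsX by simp
    show "lin (tmap rm id \<circ> dco XU)" using HX unit_dimod by simp
    fix x c
    have f1: "rm \<circ> (\<lambda>y. tens y c) = (\<lambda>y b. c () * zpow (dal X) (i+1) y b)"
      by (simp add: fun_eq_iff rmap_eq cR_tens zpowX_scale)
    have f2: "hM \<circ> (tmap (P i) (P j) \<circ> (\<lambda>s. tens s h1)) = P (i+1)"
      by (simp add: fun_eq_iff tmap_tens M_unitR A_as_P add.commute)
    have "(tmap rm id \<circ> dco XU) (tens x c) = tmap (rm \<circ> (\<lambda>y. tens y c)) (hM \<circ> (tmap (P i) (P j) \<circ> (\<lambda>s. tens s h1))) (dco X x)"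
      using HX unit_dimod linsX by (simp add: coT_pure unit_co tsimps mid_tens_right)
    also have "\<dots> = (\<lambda>z. c () * tmap (zpow (dal X) (i+1)) (P (i+1)) (dco X x) z)"
      by (simp only: f1 f2 tmap_scaleL)
    also have "\<dots> = (dco X \<circ> rm) (tens x c)"
      using HX linsX by (simp add: rmap_eq cR_tens zpowX_scale co_alP coX_scale lin_scale)
    finally show "(dco X \<circ> rm) (tens x c) = (tmap rm id \<circ> dco XU) (tens x c)" by simp
  qed
  then show ?thesis by (metis comp_apply)
qed

lemma bij_lm: "bij lm"
  using bij_comp[OF bij_cL bij_zpow[OF bij_al[OF HX]]] by (simp add: lmap_eq)
lemma bij_rm: "bij rm"
  using bij_comp[OF bij_cR bij_zpow[OF bij_al[OF HX]]] by (simp add: rmap_eq)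

lemma lm_mor: "ld_mor H UX X lm" unfolding ld_mor_def using lm_al lm_act lm_co by simp
lemma rm_mor: "ld_mor H XU X rm" unfolding ld_mor_def using rm_al rm_act rm_co by simp

end
end

lemma lin_ext_4l:
  fixes F G :: "((('a::finite \<times> 'b::finite) \<times> 'c::finite) \<times> 'd::finite \<Rightarrow> 'k::field) \<Rightarrow> ('e \<Rightarrow> 'k)"
  assumes "lin F" "lin G" "\<And>a b c d. F (tens (tens (tens a b) c) d) = G (tens (tens (tens a b) c) d)"
  shows "F = G"
proof (rule lin_ext2[OF assms(1,2)])
  fix x y
  have "F \<circ> (\<lambda>x. tens x y) = G \<circ> (\<lambda>x. tens x y)"
    using assms by (intro lin_ext3) simp_all
  then show "F (tens x y) = G (tens x y)" by (metis comp_apply)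
qed

context hb begin

lemma mor_facts:
  assumes "ld_mor H U U' f"
  shows "lin f" "\<And>u. f (dal U u) = dal U' (f u)"
  using assms by (simp_all add: ld_mor_def)

lemma mor_zpow:
  assumes "ld_mor H U U' f" "hom_long_dimod H U" "hom_long_dimod H U'"
  shows "f (zpow (dal U) n u) = zpow (dal U') n (f u)"
  by (rule zpow_commute[OF bij_al[OF assms(2)] bij_al[OF assms(3)]]) (rule mor_facts(2)[OF assms(1)])

lemma zpow_zpow: "bij f \<Longrightarrow> zpow f a (zpow f b x) = zpow f (a + b) x"
  by (simp add: zpow_add)

lemma zpow_tmap_fun:
  fixes f :: "('a::finite \<Rightarrow> 'k::field) \<Rightarrow> ('a \<Rightarrow> 'k)" and g :: "('b::finite \<Rightarrow> 'k) \<Rightarrow> ('b \<Rightarrow> 'k)"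
  assumes "lin f" "bij f" "lin g" "bij g"
  shows "zpow (tmap f g) n = tmap (zpow f n) (zpow g n)"
  using zpow_tmap[OF assms] by (simp add: fun_eq_iff)

lemma nat_assoc:
  fixes U :: "('k, 'h, 't1::finite) dimod" and U' :: "('k, 'h, 't2::finite) dimod"
    and V :: "('k, 'h, 't3::finite) dimod" and V' :: "('k, 'h, 't4::finite) dimod"
    and W :: "('k, 'h, 't5::finite) dimod" and W' :: "('k, 'h, 't6::finite) dimod"
  assumes HU: "hom_long_dimod H U" and HU': "hom_long_dimod H U'"
    and HW: "hom_long_dimod H W" and HW': "hom_long_dimod H W'"
    and f: "ld_mor H U U' f" and g: "ld_mor H V V' g" and h: "ld_mor H W W' h"
  shows "amap i j (dal U') (dal W') \<circ> tmap (tmap f g) h = tmap f (tmap g h) \<circ> amap i j (dal U) (dal W)"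
  using HU HU' HW HW' mor_facts(1)[OF f] mor_facts(1)[OF g] mor_facts(1)[OF h]
  by (intro lin_ext3) (simp_all add: amap_eq tsimps lin_zpow bij_al lin_al mor_zpow[OF f HU HU'] mor_zpow[OF h HW HW'])

lemma nat_unit:
  fixes X :: "('k, 'h, 'x1::finite) dimod" and X' :: "('k, 'h, 'x2::finite) dimod"
  assumes HX: "hom_long_dimod H X" and HX': "hom_long_dimod H X'" and f: "ld_mor H X X' f"
  shows "f \<circ> lmap j (dal X) = lmap j (dal X') \<circ> tmap id f \<and> f \<circ> rmap i (dal X) = rmap i (dal X') \<circ> tmap f id"
proof
  have lf: "lin f" by (rule mor_facts(1)[OF f])
  show "f \<circ> lmap j (dal X) = lmap j (dal X') \<circ> tmap id f"
    using HX HX' lf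
    by (intro lin_ext2) (simp_all add: lmap_eq tsimps lin_zpow bij_al lin_al cL_tens zpowX_scale lin_scale mor_zpow[OF f HX HX'])
  show "f \<circ> rmap i (dal X) = rmap i (dal X') \<circ> tmap f id"
    using HX HX' lf
    by (intro lin_ext2) (simp_all add: rmap_eq tsimps lin_zpow bij_al lin_al cR_tens zpowX_scale lin_scale mor_zpow[OF f HX HX'])
qed

lemma pentagon:
  fixes U :: "('k, 'h, 'e1::finite) dimod" and V :: "('k, 'h, 'e2::finite) dimod"
    and W :: "('k, 'h, 'e3::finite) dimod" and X :: "('k, 'h, 'e4::finite) dimod"
  assumes HU: "hom_long_dimod H U" and HV: "hom_long_dimod H V" and HW: "hom_long_dimod H W" and HX: "hom_long_dimod H X"
  shows "tmap id (amap i j (dal V) (dal X)) \<circ> amap i j (dal U) (dal X) \<circ> tmap (amap i j (dal U) (dal W)) id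
            = amap i j (dal U) (dal (tensor_dimod H i j W X))
              \<circ> (amap i j (dal (tensor_dimod H i j U V)) (dal X) :: ((('e1 \<times> 'e2) \<times> 'e3) \<times> 'e4 \<Rightarrow> 'k) \<Rightarrow> _)"
  using HU HV HW HX
  by (intro lin_ext_4l) (simp_all add: amap_eq tsimps lin_zpow bij_al lin_al dalT_eq zpow_tmap_fun)

lemma triangle:
  fixes U :: "('k, 'h, 'g1::finite) dimod" and V :: "('k, 'h, 'g2::finite) dimod"
  assumes HU: "hom_long_dimod H U" and HV: "hom_long_dimod H V"
  shows "tmap id (lmap j (dal V)) \<circ> amap i j (dal U) (dal V) = tmap (rmap i (dal U)) id"
  using HU HV
  by (intro lin_ext3) (simp_all add: amap_eq lmap_eq rmap_eq tsimps lin_zpow bij_al lin_al cL_tens cR_tens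
      zpowX_scale tens_scaleL tens_scaleR zpow_zpow zpow_0')

end

lemma tmap_functorial:
  fixes f :: "('a::finite \<Rightarrow> 'k::field) \<Rightarrow> ('b::finite \<Rightarrow> 'k)" and f' :: "('b \<Rightarrow> 'k) \<Rightarrow> ('c::finite \<Rightarrow> 'k)"
    and g :: "('d::finite \<Rightarrow> 'k::field) \<Rightarrow> ('e::finite \<Rightarrow> 'k)" and g' :: "('e \<Rightarrow> 'k) \<Rightarrow> ('x::finite \<Rightarrow> 'k)"
  assumes "lin f" "lin f'" "lin g" "lin g'"
  shows "tmap (f' \<circ> f) (g' \<circ> g) = tmap f' g' \<circ> tmap f g"
  using assms by (simp add: fun_eq_iff tmap_comp_o)

theorem proposition6p2:
  fixes H :: "('k::field_char_0, 'h::finite) hbialg" and i j :: int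
  assumes "hom_bialgebra H"
  shows
   "\<comment> \<open>objects: tensor product of Hom-Long dimodules is a Hom-Long dimodule\<close>
    (\<forall>(U::('k, 'h, 'u::finite) dimod) (V::('k, 'h, 'v::finite) dimod).
        hom_long_dimod H U \<and> hom_long_dimod H V \<longrightarrow> hom_long_dimod H (tensor_dimod H i j U V))
    \<comment> \<open>unit object\<close>
  \<and> hom_long_dimod H (unit_dimod H)
    \<comment> \<open>tensor product of morphisms is a morphism\<close>
  \<and> (\<forall>(U::('k, 'h, 'u1::finite) dimod) (U'::('k, 'h, 'u2::finite) dimod)
       (V::('k, 'h, 'v1::finite) dimod) (V'::('k, 'h, 'v2::finite) dimod) f g.
        hom_long_dimod H U \<and> hom_long_dimod H U' \<and> hom_long_dimod H V \<and> hom_long_dimod H V'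
        \<and> ld_mor H U U' f \<and> ld_mor H V V' g
        \<longrightarrow> ld_mor H (tensor_dimod H i j U V) (tensor_dimod H i j U' V') (tmap f g))
    \<comment> \<open>functoriality of the tensor product\<close>
  \<and> (tmap (id :: ('a1::finite \<Rightarrow> 'k) \<Rightarrow> _) (id :: ('b1::finite \<Rightarrow> 'k) \<Rightarrow> _) = id)
  \<and> (\<forall>(U::('k, 'h, 'p1::finite) dimod) (U'::('k, 'h, 'p2::finite) dimod) (U''::('k, 'h, 'p3::finite) dimod)
       (V::('k, 'h, 'q1::finite) dimod) (V'::('k, 'h, 'q2::finite) dimod) (V''::('k, 'h, 'q3::finite) dimod)
       f f' g g'.
        hom_long_dimod H U \<and> hom_long_dimod H U' \<and> hom_long_dimod H U''
        \<and> hom_long_dimod H V \<and> hom_long_dimod H V' \<and> hom_long_dimod H V''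
        \<and> ld_mor H U U' f \<and> ld_mor H U' U'' f' \<and> ld_mor H V V' g \<and> ld_mor H V' V'' g'
        \<longrightarrow> tmap (f' \<circ> f) (g' \<circ> g) = tmap f' g' \<circ> tmap f g)
    \<comment> \<open>associativity constraint is an isomorphism in the category of Hom-Long dimodules\<close>
  \<and> (\<forall>(U::('k, 'h, 'r1::finite) dimod) (V::('k, 'h, 'r2::finite) dimod) (W::('k, 'h, 'r3::finite) dimod).
        hom_long_dimod H U \<and> hom_long_dimod H V \<and> hom_long_dimod H W \<longrightarrow>
          ld_mor H (tensor_dimod H i j (tensor_dimod H i j U V) W) (tensor_dimod H i j U (tensor_dimod H i j V W))
                 (amap i j (dal U) (dal W))
        \<and> bij (amap i j (dal U) (dal W) :: (('r1 \<times> 'r2) \<times> 'r3 \<Rightarrow> 'k) \<Rightarrow> _)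
        \<and> ld_mor H (tensor_dimod H i j U (tensor_dimod H i j V W)) (tensor_dimod H i j (tensor_dimod H i j U V) W)
                 (inv (amap i j (dal U) (dal W))))
    \<comment> \<open>left and right unit constraints are isomorphisms\<close>
  \<and> (\<forall>(X::('k, 'h, 's::finite) dimod). hom_long_dimod H X \<longrightarrow>
          ld_mor H (tensor_dimod H i j (unit_dimod H) X) X (lmap j (dal X))
        \<and> bij (lmap j (dal X))
        \<and> ld_mor H X (tensor_dimod H i j (unit_dimod H) X) (inv (lmap j (dal X)))
        \<and> ld_mor H (tensor_dimod H i j X (unit_dimod H)) X (rmap i (dal X))
        \<and> bij (rmap i (dal X))
        \<and> ld_mor H X (tensor_dimod H i j X (unit_dimod H)) (inv (rmap i (dal X))))
    \<comment> \<open>naturality of the associativity constraint\<close>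
  \<and> (\<forall>(U::('k, 'h, 't1::finite) dimod) (U'::('k, 'h, 't2::finite) dimod)
       (V::('k, 'h, 't3::finite) dimod) (V'::('k, 'h, 't4::finite) dimod)
       (W::('k, 'h, 't5::finite) dimod) (W'::('k, 'h, 't6::finite) dimod) f g h.
        hom_long_dimod H U \<and> hom_long_dimod H U' \<and> hom_long_dimod H V \<and> hom_long_dimod H V'
        \<and> hom_long_dimod H W \<and> hom_long_dimod H W'
        \<and> ld_mor H U U' f \<and> ld_mor H V V' g \<and> ld_mor H W W' h
        \<longrightarrow> amap i j (dal U') (dal W') \<circ> tmap (tmap f g) h = tmap f (tmap g h) \<circ> amap i j (dal U) (dal W))
    \<comment> \<open>naturality of the unit constraints\<close>
  \<and> (\<forall>(X::('k, 'h, 'x1::finite) dimod) (X'::('k, 'h, 'x2::finite) dimod) f.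
        hom_long_dimod H X \<and> hom_long_dimod H X' \<and> ld_mor H X X' f
        \<longrightarrow> f \<circ> lmap j (dal X) = lmap j (dal X') \<circ> tmap id f
          \<and> f \<circ> rmap i (dal X) = rmap i (dal X') \<circ> tmap f id)
    \<comment> \<open>pentagon axiom\<close>
  \<and> (\<forall>(U::('k, 'h, 'e1::finite) dimod) (V::('k, 'h, 'e2::finite) dimod)
       (W::('k, 'h, 'e3::finite) dimod) (X::('k, 'h, 'e4::finite) dimod).
        hom_long_dimod H U \<and> hom_long_dimod H V \<and> hom_long_dimod H W \<and> hom_long_dimod H X
        \<longrightarrow> tmap id (amap i j (dal V) (dal X)) \<circ> amap i j (dal U) (dal X) \<circ> tmap (amap i j (dal U) (dal W)) id
            = amap i j (dal U) (dal (tensor_dimod H i j W X))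
              \<circ> (amap i j (dal (tensor_dimod H i j U V)) (dal X) :: ((('e1 \<times> 'e2) \<times> 'e3) \<times> 'e4 \<Rightarrow> 'k) \<Rightarrow> _))
    \<comment> \<open>triangle axiom\<close>
  \<and> (\<forall>(U::('k, 'h, 'g1::finite) dimod) (V::('k, 'h, 'g2::finite) dimod).
        hom_long_dimod H U \<and> hom_long_dimod H V
        \<longrightarrow> tmap id (lmap j (dal V)) \<circ> amap i j (dal U) (dal V) = tmap (rmap i (dal U)) id)"
proof -
  interpret hb H by (rule hb.intro) (rule assms)
  show ?thesis
    apply (intro conjI allI impI)
    apply (simp_all add: T_dimod unit_dimod tmap_mor tmap_id_fun am_mor bij_am inv_mor lm_mor bij_lm rm_mor bij_rm
       nat_assoc nat_unit pentagon triangle)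
       apply (metis tmap_functorial ld_mor_def)
      apply (blast intro: bij_am)
     apply (blast intro: inv_mor am_mor bij_am)
    apply (blast intro: nat_assoc)
    done
qed

end
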